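(* Let $T_0 \in \mathcal{G}(X)$ be fixed. Then $\mathcal{R}_{T_0}$ is a $G_\delta$ subset of $\mathcal{G}_{T_0}$.
   Context: Let $(X,m)$ and $(Y,\nu)$ both be the unit interval with Lebesgue measure, and $(Z,\mu) = (X\times Y, m\times\nu)$. $\mathcal{G}(W)$ denotes the set of invertible measure-preserving transformations of a space $W$, with the weak topology ($T_n \to T$ iff $\mu(T_nE \triangle TE) \to 0$ for every measurable $E$). $\mathcal{G}_{T_0} \subset \mathcal{G}(Z)$ is the set of transformations of the form $T(x,y) = (T_0x, T_x y)$ with $T_x \in \mathcal{G}(Y)$ (extensions of $T_0$), with the relative weak topology; $T_0$ is identified with $T_0\times\mathrm{id}_Y$ on $Z$. For $f$ on $Z$, $T^nf = f\circ T^n$. $\mathbb{E}(\cdot|X)$ is conditional expectation onto the $\sigma$-algebra of sets $B\times Y$. $L^2(Z|X)$ is the space of $f\in L^2(Z)$ with $\mathbb{E}(|f|^2|X)^{1/2} \in L^\infty(X)$. $T\in\mathcal{G}_{T_0}$ is a rigid extension of $T_0$ if there is a subsequence $n_k$ such that for all $f,g\in L^2(Z|X)$, $\lim_{k\to\infty}\|\mathbb{E}(T^{n_k}f\cdot\overline{g}|X) - \mathbb{E}(T_0^{n_k}f\cdot\overline{g}|X)\|_{L^2(X)} = 0$; $\mathcal{R}_{T_0}$ is the set of rigid extensions. *)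

theory Defs
  imports "HOL-Analysis.Analysis"
begin

text \<open>The unit interval with (Borel-)Lebesgue measure; this is both (X,m) and (Y,nu).\<close>
definition I01 :: "real measure" where
  "I01 = restrict_space lborel {0..1}"

definition Zsp :: "(real \<times> real) measure" where
  "Zsp = I01 \<Otimes>\<^sub>M I01"

definition invmpt :: "'a measure \<Rightarrow> ('a \<Rightarrow> 'a) set" where
  "invmpt W = {T. T \<in> measurable W W \<and> bij_betw T (space W) (space W)
      \<and> the_inv_into (space W) T \<in> measurable W W \<and> distr W W T = W}"

text \<open>Weak topology on G(W): the coarsest topology for which T |-> T E is continuous
  into the measure algebra (metric mu(A \<triangle> B)) for every measurable E; subbasic open sets
  {S. mu(S E \<triangle> A) < eps}.\<close>
definition weak_top :: "'a measure \<Rightarrow> ('a \<Rightarrow> 'a) topology" where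
  "weak_top W = topology_generated_by
     (insert (invmpt W)
       {{S \<in> invmpt W. measure W ((S ` E - A) \<union> (A - S ` E)) < e} | E A e.
          E \<in> sets W \<and> A \<in> sets W \<and> e > 0})"

definition ext_set :: "(real \<Rightarrow> real) \<Rightarrow> (real \<times> real \<Rightarrow> real \<times> real) set" where
  "ext_set T0 = {T \<in> invmpt Zsp. \<exists>Tx :: real \<Rightarrow> real \<Rightarrow> real.
      (\<forall>x\<in>space I01. Tx x \<in> invmpt I01) \<and>
      (\<forall>x\<in>space I01. \<forall>y\<in>space I01. T (x, y) = (T0 x, Tx x y))}"

text \<open>Conditional expectation onto the sigma-algebra of sets B x Y, viewed as a function on X.\<close>
definition condX :: "(real \<times> real \<Rightarrow> complex) \<Rightarrow> real \<Rightarrow> complex" where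
  "condX h x = (\<integral>y. h (x, y) \<partial>I01)"

definition L2ZX :: "(real \<times> real \<Rightarrow> complex) set" where
  "L2ZX = {f. f \<in> borel_measurable Zsp \<and> integrable Zsp (\<lambda>z. (cmod (f z))\<^sup>2) \<and>
      (\<exists>C::real. AE x in I01. (\<integral>\<^sup>+ y. ennreal ((cmod (f (x, y)))\<^sup>2) \<partial>I01) \<le> ennreal C)}"

definition rigid_set :: "(real \<Rightarrow> real) \<Rightarrow> (real \<times> real \<Rightarrow> real \<times> real) set" where
  "rigid_set T0 = {T \<in> ext_set T0. \<exists>n :: nat \<Rightarrow> nat. strict_mono n \<and>
      (\<forall>f\<in>L2ZX. \<forall>g\<in>L2ZX.
         (\<lambda>k. \<integral>\<^sup>+ x. ennreal ((cmod (
              condX (\<lambda>z. f ((T ^^ n k) z) * cnj (g z)) x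
            - condX (\<lambda>z. f ((T0 ^^ n k) (fst z), snd z) * cnj (g z)) x))\<^sup>2) \<partial>I01)
         \<longlonglongrightarrow> 0)}"

end

theory Submission
  imports Defs "HOL-Probability.Probability_Measure"
begin

lemma space_I01[simp]: "space I01 = {0..1}"
  by (simp add: I01_def)

lemma sets_I01: "sets I01 = sets (restrict_space borel {0..1::real})"
  unfolding I01_def by (rule sets_restrict_space_cong) simp

lemma emeasure_I01: "A \<in> sets I01 \<Longrightarrow> emeasure I01 A = emeasure lborel A"
  unfolding I01_def
  by (subst emeasure_restrict_space) (auto simp: sets_restrict_space)

lemma prob_I01: "prob_space I01"
proof
  show "emeasure I01 (space I01) = 1"
    by (simp add: I01_def emeasure_restrict_space)
qed

lemma sf_I01: "sigma_finite_measure I01"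
  using prob_I01 prob_space_imp_sigma_finite by blast

lemma space_Zsp[simp]: "space Zsp = {0..1} \<times> {0..1}"
  by (simp add: Zsp_def space_pair_measure)

lemma prob_Zsp: "prob_space Zsp"
proof -
  interpret pair_prob_space I01 I01 by (simp add: pair_prob_space_def pair_sigma_finite_def prob_I01 sf_I01)
  show ?thesis unfolding Zsp_def by (rule P.prob_space_axioms)
qed

lemma fm_Zsp: "finite_measure Zsp"
  using prob_Zsp prob_space.finite_measure by blast

lemma fm_I01: "finite_measure I01"
  using prob_I01 prob_space.finite_measure by blast

definition mpz :: "('a \<Rightarrow> 'a) \<Rightarrow> 'a measure \<Rightarrow> bool" where
  "mpz R M \<longleftrightarrow> R \<in> measurable M M \<and> distr M M R = M"

lemma mpz_comp: "mpz R M \<Longrightarrow> mpz S M \<Longrightarrow> mpz (S \<circ> R) M"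
  unfolding mpz_def by (metis distr_distr measurable_comp)

lemma mpz_id: "mpz (\<lambda>x. x) M"
  unfolding mpz_def by (simp add: distr_id)

lemma invmpt_mpz: "T \<in> invmpt M \<Longrightarrow> mpz T M"
  unfolding invmpt_def mpz_def by auto

lemma mpz_funpow: "mpz T M \<Longrightarrow> mpz (T ^^ n) M"
proof (induction n)
  case 0 then show ?case using mpz_id[of M] by (simp add: id_def)
next
  case (Suc n) then show ?case using mpz_comp[of "T^^n" M T] by (simp add: o_def)
qed

lemma mpz_P0:
  assumes "mpz T0 I01"
  shows "mpz (\<lambda>z. (T0 (fst z), snd z)) Zsp"
proof -
  have m: "T0 \<in> measurable I01 I01" "distr I01 I01 T0 = I01" using assms by (auto simp: mpz_def)
  have "distr I01 I01 T0 \<Otimes>\<^sub>M distr I01 I01 (\<lambda>x. x) = distr (I01 \<Otimes>\<^sub>M I01) (I01 \<Otimes>\<^sub>M I01) (\<lambda>(x, y). (T0 x, y))"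
    by (rule pair_measure_distr) (auto simp: m distr_id sf_I01)
  then have "distr Zsp Zsp (\<lambda>z. (T0 (fst z), snd z)) = Zsp"
    by (simp add: m distr_id Zsp_def case_prod_beta')
  moreover have "(\<lambda>z. (T0 (fst z), snd z)) \<in> measurable Zsp Zsp"
    unfolding Zsp_def using m by measurable
  ultimately show ?thesis by (simp add: mpz_def)
qed

lemma mpz_nn_integral:
  assumes "mpz R M" "f \<in> borel_measurable M"
  shows "(\<integral>\<^sup>+ z. f (R z) \<partial>M) = (\<integral>\<^sup>+ z. f z \<partial>M)"
proof -
  have "(\<integral>\<^sup>+ z. f z \<partial>M) = (\<integral>\<^sup>+ z. f z \<partial>(distr M M R))" using assms by (simp add: mpz_def)
  also have "\<dots> = (\<integral>\<^sup>+ z. f (R z) \<partial>M)"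
    using assms by (intro nn_integral_distr) (auto simp: mpz_def)
  finally show ?thesis by simp
qed

lemma mpz_emeasure:
  assumes "mpz R M" "A \<in> sets M"
  shows "emeasure M {z \<in> space M. R z \<in> A} = emeasure M A"
proof -
  have "emeasure M A = emeasure (distr M M R) A" using assms by (simp add: mpz_def)
  also have "\<dots> = emeasure M (R -` A \<inter> space M)"
    using assms by (intro emeasure_distr) (auto simp: mpz_def)
  finally show ?thesis by (simp add: Int_def conj_commute)
qed

lemma borel_measurable_cnj'[measurable]:
  "f \<in> borel_measurable M \<Longrightarrow> (\<lambda>x. cnj (f x)) \<in> borel_measurable M"
  by (rule borel_measurable_continuous_on[where f=cnj]) (auto intro!: continuous_intros)

lemma quad_le:
  fixes A B P :: real
  assumes h: "\<And>t. 0 \<le> t\<^sup>2 * A - 2*t*P + B" and A: "0 \<le> A"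
  shows "P\<^sup>2 \<le> A * B"
proof (cases "A = 0")
  case True
  have "P = 0"
  proof (rule ccontr)
    assume "P \<noteq> 0"
    have "0 \<le> ((B+1)/(2*P))\<^sup>2 * A - 2*((B+1)/(2*P))*P + B" by (rule h)
    with True \<open>P \<noteq> 0\<close> show False by (simp add: field_simps)
  qed
  then show ?thesis using True by simp
next
  case False
  then have Ap: "A > 0" using A by simp
  have "0 \<le> (P/A)\<^sup>2 * A - 2*(P/A)*P + B" by (rule h)
  then have "0 \<le> (P\<^sup>2 * A - 2*P*P*A + B*A*A)/(A*A)" using Ap by (simp add: field_simps power2_eq_square)
  then have "0 \<le> P\<^sup>2 * A - 2*P*P*A + B*A*A" using Ap mult_pos_pos[OF Ap Ap] by (auto simp: zero_le_divide_iff)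
  then have "0 \<le> A * (A*B - P\<^sup>2)" by (simp add: algebra_simps power2_eq_square)
  then have "0 \<le> A*B - P\<^sup>2" using Ap by (simp add: zero_le_mult_iff)
  then show ?thesis by simp
qed

lemma integrable_sq_iff:
  fixes u :: "'a \<Rightarrow> complex"
  assumes "u \<in> borel_measurable M"
  shows "integrable M (\<lambda>y. (cmod (u y))\<^sup>2) \<longleftrightarrow> (\<integral>\<^sup>+y. ennreal ((cmod (u y))\<^sup>2) \<partial>M) < \<infinity>"
  using assms by (simp add: integrable_iff_bounded)

lemma CS:
  fixes u v :: "'a \<Rightarrow> complex"
  assumes mu[measurable]: "u \<in> borel_measurable M" and mv[measurable]: "v \<in> borel_measurable M"
  and fu: "(\<integral>\<^sup>+y. ennreal ((cmod (u y))\<^sup>2) \<partial>M) < \<infinity>"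
  and fv: "(\<integral>\<^sup>+y. ennreal ((cmod (v y))\<^sup>2) \<partial>M) < \<infinity>"
  shows "integrable M (\<lambda>y. u y * cnj (v y))"
    and "ennreal ((cmod (\<integral>y. u y * cnj (v y) \<partial>M))\<^sup>2)
          \<le> (\<integral>\<^sup>+y. ennreal ((cmod (u y))\<^sup>2) \<partial>M) * (\<integral>\<^sup>+y. ennreal ((cmod (v y))\<^sup>2) \<partial>M)"
proof -
  define a where "a y = cmod (u y)" for y
  define b where "b y = cmod (v y)" for y
  have [measurable]: "a \<in> borel_measurable M" "b \<in> borel_measurable M" unfolding a_def b_def by measurable
  have ia: "integrable M (\<lambda>y. (a y)\<^sup>2)" using fu integrable_sq_iff[OF mu] by (simp add: a_def)
  have ib: "integrable M (\<lambda>y. (b y)\<^sup>2)" using fv integrable_sq_iff[OF mv] by (simp add: b_def)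
  have iab2: "integrable M (\<lambda>y. (a y)\<^sup>2 + (b y)\<^sup>2)" using ia ib by simp
  have bnd: "\<bar>a y * b y\<bar> \<le> (a y)\<^sup>2 + (b y)\<^sup>2" for y
  proof -
    have "0 \<le> a y" "0 \<le> b y" by (auto simp: a_def b_def)
    then have n: "0 \<le> a y * b y" by simp
    have "2 * (a y * b y) \<le> (a y)\<^sup>2 + (b y)\<^sup>2" using sum_squares_bound[of "a y" "b y"] by (simp add: mult.assoc)
    moreover have "\<bar>a y * b y\<bar> = a y * b y" using n by simp
    ultimately show ?thesis using n by linarith
  qed
  have iab: "integrable M (\<lambda>y. a y * b y)"
  proof (rule Bochner_Integration.integrable_bound[OF iab2])
    show "AE x in M. norm (a x * b x) \<le> norm ((a x)\<^sup>2 + (b x)\<^sup>2)"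
      using bnd by (intro AE_I2) simp
  qed simp
  show iuv: "integrable M (\<lambda>y. u y * cnj (v y))"
    by (rule Bochner_Integration.integrable_bound[OF iab]) (auto simp: a_def b_def norm_mult)
  define A where "A = (\<integral>y. (a y)\<^sup>2 \<partial>M)"
  define B where "B = (\<integral>y. (b y)\<^sup>2 \<partial>M)"
  define P where "P = (\<integral>y. a y * b y \<partial>M)"
  have "0 \<le> t\<^sup>2 * A - 2*t*P + B" for t
  proof -
    have "0 \<le> (\<integral>y. (t * a y - b y)\<^sup>2 \<partial>M)" by simp
    also have "(\<integral>y. (t * a y - b y)\<^sup>2 \<partial>M) = (\<integral>y. t\<^sup>2 * (a y)\<^sup>2 - 2*t*(a y * b y) + (b y)\<^sup>2 \<partial>M)"
      by (rule Bochner_Integration.integral_cong) (auto simp: power2_eq_square algebra_simps)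
    also have "\<dots> = t\<^sup>2 * A - 2*t*P + B"
      using ia ib iab by (simp add: A_def B_def P_def)
    finally show ?thesis .
  qed
  then have PAB: "P\<^sup>2 \<le> A * B" by (rule quad_le) (simp add: A_def)
  have "cmod (\<integral>y. u y * cnj (v y) \<partial>M) \<le> (\<integral>y. cmod (u y * cnj (v y)) \<partial>M)"
    by (rule integral_norm_bound)
  also have "\<dots> = P" by (simp add: P_def a_def b_def norm_mult)
  finally have le: "cmod (\<integral>y. u y * cnj (v y) \<partial>M) \<le> P" .
  then have "(cmod (\<integral>y. u y * cnj (v y) \<partial>M))\<^sup>2 \<le> P\<^sup>2"
    by (intro power_mono) auto
  also note PAB
  finally have r: "(cmod (\<integral>y. u y * cnj (v y) \<partial>M))\<^sup>2 \<le> A * B" .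
  have eA: "(\<integral>\<^sup>+y. ennreal ((cmod (u y))\<^sup>2) \<partial>M) = ennreal A"
    unfolding A_def using ia by (subst nn_integral_eq_integral) (auto simp: a_def)
  have eB: "(\<integral>\<^sup>+y. ennreal ((cmod (v y))\<^sup>2) \<partial>M) = ennreal B"
    unfolding B_def using ib by (subst nn_integral_eq_integral) (auto simp: b_def)
  have "0 \<le> A" "0 \<le> B" by (auto simp: A_def B_def)
  then show "ennreal ((cmod (\<integral>y. u y * cnj (v y) \<partial>M))\<^sup>2)
          \<le> (\<integral>\<^sup>+y. ennreal ((cmod (u y))\<^sup>2) \<partial>M) * (\<integral>\<^sup>+y. ennreal ((cmod (v y))\<^sup>2) \<partial>M)"
    unfolding eA eB using r by (simp add: ennreal_mult[symmetric])
qed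

definition N2 :: "(real \<times> real \<Rightarrow> complex) \<Rightarrow> ennreal" where
  "N2 f = (\<integral>\<^sup>+z. ennreal ((cmod (f z))\<^sup>2) \<partial>Zsp)"

definition L2 :: "(real \<times> real \<Rightarrow> complex) \<Rightarrow> bool" where
  "L2 f \<longleftrightarrow> f \<in> borel_measurable Zsp \<and> N2 f < \<infinity>"

definition Sec :: "(real \<times> real \<Rightarrow> complex) \<Rightarrow> real \<Rightarrow> ennreal" where
  "Sec h x = (\<integral>\<^sup>+y. ennreal ((cmod (h (x,y)))\<^sup>2) \<partial>I01)"

definition Psi :: "(real \<times> real \<Rightarrow> real \<times> real) \<Rightarrow> (real \<times> real \<Rightarrow> complex) \<Rightarrow> (real \<times> real \<Rightarrow> complex) \<Rightarrow> real \<Rightarrow> complex" where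
  "Psi R f g x = condX (\<lambda>z. f (R z) * cnj (g z)) x"

lemma L2_meas: "L2 f \<Longrightarrow> f \<in> borel_measurable Zsp" by (simp add: L2_def)

lemma mpz_meas: "mpz R M \<Longrightarrow> R \<in> measurable M M" by (simp add: mpz_def)

lemma N2_comp: "mpz R Zsp \<Longrightarrow> f \<in> borel_measurable Zsp \<Longrightarrow> N2 (\<lambda>z. f (R z)) = N2 f"
  unfolding N2_def by (rule mpz_nn_integral) auto

lemma L2_comp: "L2 f \<Longrightarrow> mpz R Zsp \<Longrightarrow> L2 (\<lambda>z. f (R z))"
  unfolding L2_def using N2_comp[of R f] measurable_comp[OF mpz_meas[of R Zsp], of f]
  by (auto simp: comp_def)

lemma sec_meas:
  assumes "h \<in> borel_measurable Zsp" "x \<in> space I01"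
  shows "(\<lambda>y. h (x,y)) \<in> borel_measurable I01"
proof -
  have "(\<lambda>y. (x,y)) \<in> measurable I01 Zsp" unfolding Zsp_def using assms(2) by measurable
  then show ?thesis using measurable_comp[of "\<lambda>y. (x,y)" I01 Zsp h] assms(1) by (simp add: comp_def)
qed

lemma Sec_meas: assumes "h \<in> borel_measurable Zsp" shows "Sec h \<in> borel_measurable I01"
  unfolding Sec_def
  by (rule sigma_finite_measure.borel_measurable_nn_integral[OF sf_I01]) (use assms in \<open>simp add: Zsp_def\<close>)

lemma Sec_integral: "h \<in> borel_measurable Zsp \<Longrightarrow> (\<integral>\<^sup>+x. Sec h x \<partial>I01) = N2 h"
  unfolding Sec_def N2_def Zsp_def
  by (rule sigma_finite_measure.nn_integral_fst[OF sf_I01, of "\<lambda>z. ennreal ((cmod (h z))\<^sup>2)", simplified]) measurable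

lemma Sec_AE: "L2 h \<Longrightarrow> AE x in I01. Sec h x < \<infinity>"
proof -
  assume h: "L2 h"
  then have "(\<integral>\<^sup>+x. Sec h x \<partial>I01) \<noteq> \<infinity>" using Sec_integral[of h] by (simp add: L2_def less_top)
  from nn_integral_PInf_AE[OF Sec_meas this] h show ?thesis by (simp add: L2_def less_top)
qed

lemma Psi_meas:
  assumes "f \<in> borel_measurable Zsp" "g \<in> borel_measurable Zsp" "R \<in> measurable Zsp Zsp"
  shows "Psi R f g \<in> borel_measurable I01"
proof -
  have m: "(\<lambda>z. f (R z) * cnj (g z)) \<in> borel_measurable Zsp"
    using measurable_comp[OF assms(3) assms(1)] assms(2) by (simp add: comp_def)
  have "(\<lambda>x. \<integral>y. (\<lambda>z. f (R z) * cnj (g z)) (x, y) \<partial>I01) \<in> borel_measurable I01"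
    by (rule sigma_finite_measure.borel_measurable_lebesgue_integral[OF sf_I01]) (use m in \<open>simp add: Zsp_def\<close>)
  then show ?thesis unfolding Psi_def condX_def by simp
qed

lemma Psi_CS:
  assumes fR: "(\<lambda>z. f (R z)) \<in> borel_measurable Zsp" and g: "g \<in> borel_measurable Zsp"
    and x: "x \<in> space I01" and s1: "Sec (\<lambda>z. f (R z)) x < \<infinity>" and s2: "Sec g x < \<infinity>"
  shows "integrable I01 (\<lambda>y. f (R (x,y)) * cnj (g (x,y)))"
    and "ennreal ((cmod (Psi R f g x))\<^sup>2) \<le> Sec (\<lambda>z. f (R z)) x * Sec g x"
proof -
  have m1: "(\<lambda>y. f (R (x,y))) \<in> borel_measurable I01" using sec_meas[OF fR x] by simp
  have m2: "(\<lambda>y. g (x,y)) \<in> borel_measurable I01" using sec_meas[OF g x] by simp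
  note c = CS[OF m1 m2]
  show "integrable I01 (\<lambda>y. f (R (x,y)) * cnj (g (x,y)))" using c s1 s2 by (simp add: Sec_def)
  show "ennreal ((cmod (Psi R f g x))\<^sup>2) \<le> Sec (\<lambda>z. f (R z)) x * Sec g x"
    using c s1 s2 by (simp add: Sec_def Psi_def condX_def)
qed

lemma Psi_add_f:
  assumes "L2 f1" "L2 f2" "L2 g" "mpz R Zsp"
  shows "AE x in I01. Psi R (\<lambda>z. f1 z + f2 z) g x = Psi R f1 g x + Psi R f2 g x"
proof -
  have l1: "L2 (\<lambda>z. f1 (R z))" and l2: "L2 (\<lambda>z. f2 (R z))" using assms L2_comp by auto
  show ?thesis
    using Sec_AE[OF l1] Sec_AE[OF l2] Sec_AE[OF assms(3)] AE_space
  proof eventually_elim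
    case (elim x)
    then have x: "x \<in> space I01" by simp
    have i1: "integrable I01 (\<lambda>y. f1 (R (x,y)) * cnj (g (x,y)))"
      using Psi_CS(1)[of f1 R g x] elim x l1 assms(3) by (simp add: L2_def)
    have i2: "integrable I01 (\<lambda>y. f2 (R (x,y)) * cnj (g (x,y)))"
      using Psi_CS(1)[of f2 R g x] elim x l2 assms(3) by (simp add: L2_def)
    show ?case unfolding Psi_def condX_def using i1 i2 by (simp add: distrib_right)
  qed
qed

lemma Psi_add_g:
  assumes "L2 f" "L2 g1" "L2 g2" "mpz R Zsp"
  shows "AE x in I01. Psi R f (\<lambda>z. g1 z + g2 z) x = Psi R f g1 x + Psi R f g2 x"
proof -
  have l: "L2 (\<lambda>z. f (R z))" using assms L2_comp by auto
  show ?thesis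
    using Sec_AE[OF l] Sec_AE[OF assms(2)] Sec_AE[OF assms(3)] AE_space
  proof eventually_elim
    case (elim x)
    then have x: "x \<in> space I01" by simp
    have i1: "integrable I01 (\<lambda>y. f (R (x,y)) * cnj (g1 (x,y)))"
      using Psi_CS(1)[of f R g1 x] elim x l assms(2) by (simp add: L2_def)
    have i2: "integrable I01 (\<lambda>y. f (R (x,y)) * cnj (g2 (x,y)))"
      using Psi_CS(1)[of f R g2 x] elim x l assms(3) by (simp add: L2_def)
    show ?case unfolding Psi_def condX_def using i1 i2 by (simp add: distrib_left)
  qed
qed

lemma Psi_smult_f: "Psi R (\<lambda>z. c * f z) g x = c * Psi R f g x"
  unfolding Psi_def condX_def by (simp add: mult.assoc)

lemma Psi_smult_g: "Psi R f (\<lambda>z. c * g z) x = cnj c * Psi R f g x"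
proof -
  have "(\<lambda>y. f (R (x,y)) * cnj (c * g (x,y))) = (\<lambda>y. cnj c * (f (R (x,y)) * cnj (g (x,y))))"
    by (auto simp: algebra_simps)
  then show ?thesis unfolding Psi_def condX_def by simp
qed

lemma Psi_bnd_f:
  assumes "L2 h" "mpz R Zsp" "g \<in> borel_measurable Zsp" "AE x in I01. Sec g x \<le> K" "K < \<infinity>"
  shows "(\<integral>\<^sup>+x. ennreal ((cmod (Psi R h g x))\<^sup>2) \<partial>I01) \<le> K * N2 h"
proof -
  have l: "L2 (\<lambda>z. h (R z))" using assms L2_comp by auto
  have "(\<integral>\<^sup>+x. ennreal ((cmod (Psi R h g x))\<^sup>2) \<partial>I01) \<le> (\<integral>\<^sup>+x. K * Sec (\<lambda>z. h (R z)) x \<partial>I01)"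
  proof (rule nn_integral_mono_AE)
    show "AE x in I01. ennreal ((cmod (Psi R h g x))\<^sup>2) \<le> K * Sec (\<lambda>z. h (R z)) x"
      using Sec_AE[OF l] assms(4) AE_space
    proof eventually_elim
      case (elim x)
      then have "Sec g x < \<infinity>" using assms(5) by (meson le_less_trans)
      then have "ennreal ((cmod (Psi R h g x))\<^sup>2) \<le> Sec (\<lambda>z. h (R z)) x * Sec g x"
        using Psi_CS(2)[of h R g x] elim l assms(3) by (simp add: L2_def)
      also have "\<dots> \<le> Sec (\<lambda>z. h (R z)) x * K" using elim by (intro mult_left_mono) auto
      finally show ?case by (simp add: mult.commute)
    qed
  qed
  also have "\<dots> = K * (\<integral>\<^sup>+x. Sec (\<lambda>z. h (R z)) x \<partial>I01)"
    using l by (intro nn_integral_cmult Sec_meas) (simp add: L2_def)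
  also have "\<dots> = K * N2 h"
    using l assms by (simp add: Sec_integral L2_def N2_comp)
  finally show ?thesis .
qed

lemma Sec_le_1:
  assumes "f \<in> borel_measurable Zsp" "\<And>z. cmod (f z) \<le> 1"
  shows "Sec f x \<le> 1"
proof -
  have "Sec f x \<le> (\<integral>\<^sup>+y. 1 \<partial>I01)" unfolding Sec_def
    using assms(2) by (intro nn_integral_mono) (simp add: power_le_one)
  also have "\<dots> = 1" using prob_space.emeasure_space_1[OF prob_I01] by simp
  finally show ?thesis .
qed

lemma Psi_bnd_g:
  assumes "f \<in> borel_measurable Zsp" "\<And>z. cmod (f z) \<le> 1" "L2 h" "mpz R Zsp"
  shows "(\<integral>\<^sup>+x. ennreal ((cmod (Psi R f h x))\<^sup>2) \<partial>I01) \<le> N2 h"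
proof -
  have mR: "(\<lambda>z. f (R z)) \<in> borel_measurable Zsp"
    using measurable_comp[OF mpz_meas[OF assms(4)] assms(1)] by (simp add: comp_def)
  have s1: "Sec (\<lambda>z. f (R z)) x \<le> 1" for x using Sec_le_1[OF mR] assms(2) by auto
  have "(\<integral>\<^sup>+x. ennreal ((cmod (Psi R f h x))\<^sup>2) \<partial>I01) \<le> (\<integral>\<^sup>+x. Sec h x \<partial>I01)"
  proof (rule nn_integral_mono_AE)
    show "AE x in I01. ennreal ((cmod (Psi R f h x))\<^sup>2) \<le> Sec h x"
      using Sec_AE[OF assms(3)] AE_space
    proof eventually_elim
      case (elim x)
      have "Sec (\<lambda>z. f (R z)) x < \<infinity>" using s1[of x] by (simp add: le_less_trans[OF _ ennreal_one_less_top])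
      then have "ennreal ((cmod (Psi R f h x))\<^sup>2) \<le> Sec (\<lambda>z. f (R z)) x * Sec h x"
        using Psi_CS(2)[of f R h x] elim mR assms(3) by (simp add: L2_def)
      also have "\<dots> \<le> 1 * Sec h x" using s1[of x] by (intro mult_right_mono) auto
      finally show ?case by simp
    qed
  qed
  also have "\<dots> = N2 h" using assms(3) by (simp add: Sec_integral L2_def)
  finally show ?thesis .
qed

lemma sq_tri: "(cmod (a + b))\<^sup>2 \<le> 2 * (cmod a)\<^sup>2 + 2 * (cmod b)\<^sup>2"
proof -
  have "cmod (a + b) \<le> cmod a + cmod b" by (rule norm_triangle_ineq)
  then have "(cmod (a + b))\<^sup>2 \<le> (cmod a + cmod b)\<^sup>2" by (intro power_mono) auto
  also have "\<dots> \<le> 2 * (cmod a)\<^sup>2 + 2 * (cmod b)\<^sup>2"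
    using sum_squares_bound[of "cmod a" "cmod b"] by (simp add: power2_sum)
  finally show ?thesis .
qed

lemma ennreal_sq_tri:
  "ennreal ((cmod (a + b))\<^sup>2) \<le> 2 * ennreal ((cmod a)\<^sup>2) + 2 * ennreal ((cmod b)\<^sup>2)"
proof -
  have "ennreal ((cmod (a + b))\<^sup>2) \<le> ennreal (2 * (cmod a)\<^sup>2 + 2 * (cmod b)\<^sup>2)"
    using sq_tri by (rule ennreal_leI)
  also have "\<dots> = 2 * ennreal ((cmod a)\<^sup>2) + 2 * ennreal ((cmod b)\<^sup>2)"
    by (simp add: ennreal_plus ennreal_mult)
  finally show ?thesis .
qed

lemma ennreal_sq_tri':
  "ennreal ((cmod (a - b))\<^sup>2) \<le> 2 * ennreal ((cmod a)\<^sup>2) + 2 * ennreal ((cmod b)\<^sup>2)"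
  using ennreal_sq_tri[of a "-b"] by simp

definition P0 :: "(real \<Rightarrow> real) \<Rightarrow> nat \<Rightarrow> real \<times> real \<Rightarrow> real \<times> real" where
  "P0 T0 N z = ((T0 ^^ N) (fst z), snd z)"

definition Phi where
  "Phi T T0 N f g x = Psi (T ^^ N) f g x - Psi (P0 T0 N) f g x"

definition Q where
  "Q T T0 N f g = (\<integral>\<^sup>+x. ennreal ((cmod (Phi T T0 N f g x))\<^sup>2) \<partial>I01)"

lemma mpz_P0': "mpz T0 I01 \<Longrightarrow> mpz (P0 T0 N) Zsp"
  unfolding P0_def by (intro mpz_P0 mpz_funpow)

lemma Phi_meas:
  assumes "mpz T Zsp" "mpz T0 I01" "f \<in> borel_measurable Zsp" "g \<in> borel_measurable Zsp"
  shows "Phi T T0 N f g \<in> borel_measurable I01"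
proof -
  have "Psi (T ^^ N) f g \<in> borel_measurable I01"
    using assms by (intro Psi_meas mpz_meas mpz_funpow) auto
  moreover have "Psi (P0 T0 N) f g \<in> borel_measurable I01"
    using assms by (intro Psi_meas mpz_meas mpz_P0') auto
  ultimately show ?thesis unfolding Phi_def[abs_def] by measurable
qed

lemma nn_sq_split:
  fixes u v w :: "'a \<Rightarrow> complex"
  assumes "u \<in> borel_measurable M" "v \<in> borel_measurable M" "AE x in M. w x = u x + v x"
  shows "(\<integral>\<^sup>+x. ennreal ((cmod (w x))\<^sup>2) \<partial>M)
     \<le> 2 * (\<integral>\<^sup>+x. ennreal ((cmod (u x))\<^sup>2) \<partial>M) + 2 * (\<integral>\<^sup>+x. ennreal ((cmod (v x))\<^sup>2) \<partial>M)"
proof -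
  have "(\<integral>\<^sup>+x. ennreal ((cmod (w x))\<^sup>2) \<partial>M)
     \<le> (\<integral>\<^sup>+x. 2 * ennreal ((cmod (u x))\<^sup>2) + 2 * ennreal ((cmod (v x))\<^sup>2) \<partial>M)"
    using assms(3) by (intro nn_integral_mono_AE) (auto elim!: eventually_mono intro: ennreal_sq_tri)
  also have "\<dots> = (\<integral>\<^sup>+x. 2 * ennreal ((cmod (u x))\<^sup>2) \<partial>M) + (\<integral>\<^sup>+x. 2 * ennreal ((cmod (v x))\<^sup>2) \<partial>M)"
    using assms by (intro nn_integral_add) auto
  also have "\<dots> = 2 * (\<integral>\<^sup>+x. ennreal ((cmod (u x))\<^sup>2) \<partial>M) + 2 * (\<integral>\<^sup>+x. ennreal ((cmod (v x))\<^sup>2) \<partial>M)"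
    using assms by (simp add: nn_integral_cmult)
  finally show ?thesis .
qed

lemma Phi_add_f:
  assumes "mpz T Zsp" "mpz T0 I01" "L2 f1" "L2 f2" "L2 g"
  shows "AE x in I01. Phi T T0 N (\<lambda>z. f1 z + f2 z) g x = Phi T T0 N f1 g x + Phi T T0 N f2 g x"
  using Psi_add_f[OF assms(3,4,5) mpz_funpow[OF assms(1), of N]]
        Psi_add_f[OF assms(3,4,5) mpz_P0'[OF assms(2), of N]]
  by eventually_elim (simp add: Phi_def)

lemma Phi_add_g:
  assumes "mpz T Zsp" "mpz T0 I01" "L2 f" "L2 g1" "L2 g2"
  shows "AE x in I01. Phi T T0 N f (\<lambda>z. g1 z + g2 z) x = Phi T T0 N f g1 x + Phi T T0 N f g2 x"
  using Psi_add_g[OF assms(3,4,5) mpz_funpow[OF assms(1), of N]]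
        Psi_add_g[OF assms(3,4,5) mpz_P0'[OF assms(2), of N]]
  by eventually_elim (simp add: Phi_def)

lemma Q_add_f:
  assumes "mpz T Zsp" "mpz T0 I01" "L2 f1" "L2 f2" "L2 g"
  shows "Q T T0 N (\<lambda>z. f1 z + f2 z) g \<le> 2 * Q T T0 N f1 g + 2 * Q T T0 N f2 g"
  unfolding Q_def
  by (rule nn_sq_split[OF Phi_meas Phi_meas Phi_add_f]) (use assms in \<open>auto simp: L2_def\<close>)

lemma Q_add_g:
  assumes "mpz T Zsp" "mpz T0 I01" "L2 f" "L2 g1" "L2 g2"
  shows "Q T T0 N f (\<lambda>z. g1 z + g2 z) \<le> 2 * Q T T0 N f g1 + 2 * Q T T0 N f g2"
  unfolding Q_def
  by (rule nn_sq_split[OF Phi_meas Phi_meas Phi_add_g]) (use assms in \<open>auto simp: L2_def\<close>)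

lemma Q_smult_f:
  assumes "mpz T Zsp" "mpz T0 I01" "f \<in> borel_measurable Zsp" "g \<in> borel_measurable Zsp"
  shows "Q T T0 N (\<lambda>z. c * f z) g = ennreal ((cmod c)\<^sup>2) * Q T T0 N f g"
proof -
  have "Phi T T0 N (\<lambda>z. c * f z) g x = c * Phi T T0 N f g x" for x
    by (simp add: Phi_def Psi_smult_f right_diff_distrib)
  then have "Q T T0 N (\<lambda>z. c * f z) g = (\<integral>\<^sup>+x. ennreal ((cmod c)\<^sup>2) * ennreal ((cmod (Phi T T0 N f g x))\<^sup>2) \<partial>I01)"
    unfolding Q_def by (simp add: norm_mult power_mult_distrib ennreal_mult)
  also have "\<dots> = ennreal ((cmod c)\<^sup>2) * Q T T0 N f g"
    unfolding Q_def using Phi_meas[OF assms] by (intro nn_integral_cmult) measurable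
  finally show ?thesis .
qed

lemma Q_smult_g:
  assumes "mpz T Zsp" "mpz T0 I01" "f \<in> borel_measurable Zsp" "g \<in> borel_measurable Zsp"
  shows "Q T T0 N f (\<lambda>z. c * g z) = ennreal ((cmod c)\<^sup>2) * Q T T0 N f g"
proof -
  have "Phi T T0 N f (\<lambda>z. c * g z) x = cnj c * Phi T T0 N f g x" for x
    by (simp add: Phi_def Psi_smult_g right_diff_distrib)
  then have "Q T T0 N f (\<lambda>z. c * g z) = (\<integral>\<^sup>+x. ennreal ((cmod c)\<^sup>2) * ennreal ((cmod (Phi T T0 N f g x))\<^sup>2) \<partial>I01)"
    unfolding Q_def by (simp add: norm_mult power_mult_distrib ennreal_mult)
  also have "\<dots> = ennreal ((cmod c)\<^sup>2) * Q T T0 N f g"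
    unfolding Q_def using Phi_meas[OF assms] by (intro nn_integral_cmult) measurable
  finally show ?thesis .
qed

lemma four_le: "(a::ennreal) \<le> c \<Longrightarrow> b \<le> c \<Longrightarrow> 2 * a + 2 * b \<le> 4 * c"
proof -
  assume "a \<le> c" "b \<le> c"
  then have "2 * a + 2 * b \<le> 2 * c + 2 * c" by (intro add_mono mult_left_mono) auto
  also have "\<dots> = 4 * c" by (simp add: distrib_right[symmetric])
  finally show ?thesis .
qed

lemma Q_bnd_f:
  assumes "mpz T Zsp" "mpz T0 I01" "L2 h" "g \<in> borel_measurable Zsp" "AE x in I01. Sec g x \<le> K" "K < \<infinity>"
  shows "Q T T0 N h g \<le> 4 * (K * N2 h)"
proof -
  have m1: "mpz (T ^^ N) Zsp" and m2: "mpz (P0 T0 N) Zsp" using assms mpz_funpow mpz_P0' by auto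
  have "Q T T0 N h g \<le> 2 * (\<integral>\<^sup>+x. ennreal ((cmod (Psi (T ^^ N) h g x))\<^sup>2) \<partial>I01)
      + 2 * (\<integral>\<^sup>+x. ennreal ((cmod (- Psi (P0 T0 N) h g x))\<^sup>2) \<partial>I01)"
    unfolding Q_def
    by (rule nn_sq_split) (use assms m1 m2 in \<open>auto simp: Phi_def L2_def intro!: Psi_meas mpz_meas borel_measurable_uminus\<close>)
  also have "\<dots> \<le> 4 * (K * N2 h)"
    using Psi_bnd_f[OF assms(3) m1 assms(4,5,6)] Psi_bnd_f[OF assms(3) m2 assms(4,5,6)]
    by (intro four_le) auto
  finally show ?thesis .
qed

lemma Q_bnd_g:
  assumes "mpz T Zsp" "mpz T0 I01" "f \<in> borel_measurable Zsp" "\<And>z. cmod (f z) \<le> 1" "L2 h"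
  shows "Q T T0 N f h \<le> 4 * N2 h"
proof -
  have m1: "mpz (T ^^ N) Zsp" and m2: "mpz (P0 T0 N) Zsp" using assms mpz_funpow mpz_P0' by auto
  have "Q T T0 N f h \<le> 2 * (\<integral>\<^sup>+x. ennreal ((cmod (Psi (T ^^ N) f h x))\<^sup>2) \<partial>I01)
      + 2 * (\<integral>\<^sup>+x. ennreal ((cmod (- Psi (P0 T0 N) f h x))\<^sup>2) \<partial>I01)"
    unfolding Q_def
    by (rule nn_sq_split) (use assms m1 m2 in \<open>auto simp: Phi_def L2_def intro!: Psi_meas mpz_meas borel_measurable_uminus\<close>)
  also have "\<dots> \<le> 4 * N2 h"
    using Psi_bnd_g[OF assms(3,4,5) m1] Psi_bnd_g[OF assms(3,4,5) m2]
    by (intro four_le) auto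
  finally show ?thesis .
qed

lemma enn_tendsto0I:
  assumes "\<And>r::real. r > 0 \<Longrightarrow> eventually (\<lambda>k. a k < ennreal r) sequentially"
  shows "a \<longlonglongrightarrow> (0::ennreal)"
proof (rule order_tendstoI)
  fix b :: ennreal assume "b < 0" then show "eventually (\<lambda>k. b < a k) sequentially" by simp
next
  fix b :: ennreal assume b: "0 < b"
  obtain r where r: "r > 0" "ennreal r \<le> b"
  proof (cases "b = top")
    case True then show ?thesis using that[of 1] by simp
  next
    case False
    then have "b = ennreal (enn2real b)" by (simp add: ennreal_enn2real_if)
    moreover have "enn2real b > 0" using b False by (simp add: enn2real_positive_iff less_top)
    ultimately show ?thesis using that[of "enn2real b"] by simp
  qed
  show "eventually (\<lambda>k. a k < b) sequentially"
    using assms[OF r(1)] by eventually_elim (use r in auto)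
qed

lemma enn_tendsto0D:
  assumes "a \<longlonglongrightarrow> (0::ennreal)" "r > 0"
  shows "eventually (\<lambda>k. a k < ennreal r) sequentially"
  using order_tendstoD(2)[OF assms(1)] assms(2) by simp

lemma enn_lim0:
  assumes "\<And>e::real. e > 0 \<Longrightarrow> \<exists>c. c \<longlonglongrightarrow> 0 \<and> (\<forall>k. a k \<le> 2 * c k + ennreal e)"
  shows "a \<longlonglongrightarrow> (0::ennreal)"
proof (rule enn_tendsto0I)
  fix r :: real assume r: "r > 0"
  then obtain c where c: "c \<longlonglongrightarrow> 0" "\<And>k. a k \<le> 2 * c k + ennreal (r/4)"
    using assms[of "r/4"] by auto
  show "eventually (\<lambda>k. a k < ennreal r) sequentially"
  proof -
    have "eventually (\<lambda>k. c k < ennreal (r/4)) sequentially" using enn_tendsto0D[OF c(1)] r by simp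
    then show ?thesis
  proof eventually_elim
    case (elim k)
    have "a k \<le> 2 * c k + ennreal (r/4)" by (rule c(2))
    also have "\<dots> \<le> 2 * ennreal (r/4) + ennreal (r/4)"
      using elim by (intro add_mono mult_left_mono) auto
    also have "\<dots> = ennreal (r/2) + ennreal (r/4)"
      using ennreal_mult'[of 2 "r/4"] by simp
    also have "\<dots> = ennreal (r/2 + r/4)" using r by (intro ennreal_plus[symmetric]) auto
    also have "\<dots> < ennreal r" using r by (intro ennreal_lessI) auto
    finally show ?case .
  qed
  qed
qed

definition Good where
  "Good T T0 n f g \<longleftrightarrow> (\<lambda>k. Q T T0 (n k) f g) \<longlonglongrightarrow> 0"

lemma Good_add_f:
  assumes "mpz T Zsp" "mpz T0 I01" "L2 f1" "L2 f2" "L2 g" "Good T T0 n f1 g" "Good T T0 n f2 g"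
  shows "Good T T0 n (\<lambda>z. f1 z + f2 z) g"
  unfolding Good_def
proof (rule enn_lim0)
  fix e :: real assume "e > 0"
  have "(\<lambda>k. Q T T0 (n k) f1 g + Q T T0 (n k) f2 g) \<longlonglongrightarrow> 0 + 0"
    using assms(6,7) unfolding Good_def by (intro tendsto_add)
  moreover have "Q T T0 (n k) (\<lambda>z. f1 z + f2 z) g \<le> 2 * (Q T T0 (n k) f1 g + Q T T0 (n k) f2 g) + ennreal e" for k
    using Q_add_f[OF assms(1-5), of "n k"] by (simp add: distrib_left order_trans[OF _ add_increasing2])
  ultimately show "\<exists>c. c \<longlonglongrightarrow> 0 \<and> (\<forall>k. Q T T0 (n k) (\<lambda>z. f1 z + f2 z) g \<le> 2 * c k + ennreal e)"
    by (intro exI[of _ "\<lambda>k. Q T T0 (n k) f1 g + Q T T0 (n k) f2 g"]) auto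
qed

lemma Good_add_g:
  assumes "mpz T Zsp" "mpz T0 I01" "L2 f" "L2 g1" "L2 g2" "Good T T0 n f g1" "Good T T0 n f g2"
  shows "Good T T0 n f (\<lambda>z. g1 z + g2 z)"
  unfolding Good_def
proof (rule enn_lim0)
  fix e :: real assume "e > 0"
  have "(\<lambda>k. Q T T0 (n k) f g1 + Q T T0 (n k) f g2) \<longlonglongrightarrow> 0 + 0"
    using assms(6,7) unfolding Good_def by (intro tendsto_add)
  moreover have "Q T T0 (n k) f (\<lambda>z. g1 z + g2 z) \<le> 2 * (Q T T0 (n k) f g1 + Q T T0 (n k) f g2) + ennreal e" for k
    using Q_add_g[OF assms(1-5), of "n k"] by (simp add: distrib_left order_trans[OF _ add_increasing2])
  ultimately show "\<exists>c. c \<longlonglongrightarrow> 0 \<and> (\<forall>k. Q T T0 (n k) f (\<lambda>z. g1 z + g2 z) \<le> 2 * c k + ennreal e)"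
    by (intro exI[of _ "\<lambda>k. Q T T0 (n k) f g1 + Q T T0 (n k) f g2"]) auto
qed

lemma Good_smult_f:
  assumes "mpz T Zsp" "mpz T0 I01" "f \<in> borel_measurable Zsp" "g \<in> borel_measurable Zsp" "Good T T0 n f g"
  shows "Good T T0 n (\<lambda>z. c * f z) g"
  using ennreal_tendsto_cmult[of "ennreal ((cmod c)\<^sup>2)", OF _ assms(5)[unfolded Good_def]]
  unfolding Good_def Q_smult_f[OF assms(1-4)] by simp

lemma Good_smult_g:
  assumes "mpz T Zsp" "mpz T0 I01" "f \<in> borel_measurable Zsp" "g \<in> borel_measurable Zsp" "Good T T0 n f g"
  shows "Good T T0 n f (\<lambda>z. c * g z)"
  using ennreal_tendsto_cmult[of "ennreal ((cmod c)\<^sup>2)", OF _ assms(5)[unfolded Good_def]]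
  unfolding Good_def Q_smult_g[OF assms(1-4)] by simp

lemma L2_bounded:
  assumes "f \<in> borel_measurable Zsp" "\<And>z. cmod (f z) \<le> 1"
  shows "L2 f"
proof -
  have "N2 f \<le> (\<integral>\<^sup>+z. 1 \<partial>Zsp)" unfolding N2_def
    using assms(2) by (intro nn_integral_mono) (simp add: power_le_one)
  also have "\<dots> = 1" using prob_space.emeasure_space_1[OF prob_Zsp] by simp
  finally show ?thesis using assms(1) by (simp add: L2_def le_less_trans[OF _ ennreal_one_less_top])
qed

lemma L2_diff: "L2 f \<Longrightarrow> N2 (\<lambda>z. f z - g z) < ennreal e \<Longrightarrow> g \<in> borel_measurable Zsp \<Longrightarrow> L2 (\<lambda>z. f z - g z)"
  unfolding L2_def by (auto intro: less_trans[OF _ ennreal_less_top])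

lemma eight_le:
  fixes C eps e :: real
  assumes "0 \<le> C" "0 \<le> eps" "8 * C * eps \<le> e" "(a::ennreal) \<le> 4 * (ennreal C * ennreal eps)"
  shows "2 * a \<le> ennreal e"
proof -
  have "2 * a \<le> 2 * (4 * (ennreal C * ennreal eps))" using assms(4) by (intro mult_left_mono) auto
  also have "\<dots> = ennreal (8 * C * eps)"
    using assms(1,2) by (simp add: ennreal_mult ennreal_mult' mult.assoc[symmetric])
  also have "\<dots> \<le> ennreal e" using assms(3) by (rule ennreal_leI)
  finally show ?thesis .
qed

lemma Good_close_f:
  assumes T: "mpz T Zsp" "mpz T0 I01" and f: "L2 f" and g: "L2 g"
    and C: "0 \<le> C" "AE x in I01. Sec g x \<le> ennreal C"
    and approx: "\<And>e. e > 0 \<Longrightarrow> \<exists>f'. L2 f' \<and> Good T T0 n f' g \<and> N2 (\<lambda>z. f z - f' z) < ennreal e"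
  shows "Good T T0 n f g"
  unfolding Good_def
proof (rule enn_lim0)
  fix e :: real assume e: "e > 0"
  define eps where "eps = e / (8 * C + 1)"
  have eps: "eps > 0" using e C by (simp add: eps_def)
  have le: "8 * C * eps \<le> e"
  proof -
    have "8 * C * eps = e * (8 * C / (8 * C + 1))" using C by (simp add: eps_def field_simps)
    also have "\<dots> \<le> e * 1" using e C by (intro mult_left_mono) auto
    finally show ?thesis by simp
  qed
  obtain f' where f': "L2 f'" "Good T T0 n f' g" "N2 (\<lambda>z. f z - f' z) < ennreal eps"
    using approx[OF eps] by blast
  have d: "L2 (\<lambda>z. f z - f' z)" using L2_diff[OF f f'(3)] f'(1) by (simp add: L2_def)
  have "Q T T0 (n k) f g \<le> 2 * Q T T0 (n k) f' g + ennreal e" for k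
  proof -
    have "Q T T0 (n k) f g = Q T T0 (n k) (\<lambda>z. f' z + (f z - f' z)) g" by simp
    also have "\<dots> \<le> 2 * Q T T0 (n k) f' g + 2 * Q T T0 (n k) (\<lambda>z. f z - f' z) g"
      by (rule Q_add_f[OF T f'(1) d g])
    also have "2 * Q T T0 (n k) (\<lambda>z. f z - f' z) g \<le> ennreal e"
    proof (rule eight_le[OF C(1) less_imp_le[OF eps] le])
      have "Q T T0 (n k) (\<lambda>z. f z - f' z) g \<le> 4 * (ennreal C * N2 (\<lambda>z. f z - f' z))"
        by (rule Q_bnd_f[OF T d L2_meas[OF g] C(2)]) simp
      also have "\<dots> \<le> 4 * (ennreal C * ennreal eps)"
        using f'(3) by (intro mult_left_mono) auto
      finally show "Q T T0 (n k) (\<lambda>z. f z - f' z) g \<le> 4 * (ennreal C * ennreal eps)" .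
    qed
    finally show ?thesis by simp
  qed
  then show "\<exists>c. c \<longlonglongrightarrow> 0 \<and> (\<forall>k. Q T T0 (n k) f g \<le> 2 * c k + ennreal e)"
    using f'(2) unfolding Good_def by blast
qed

lemma Good_close_g:
  assumes T: "mpz T Zsp" "mpz T0 I01" and f: "f \<in> borel_measurable Zsp" "\<And>z. cmod (f z) \<le> 1"
    and g: "L2 g"
    and approx: "\<And>e. e > 0 \<Longrightarrow> \<exists>g'. L2 g' \<and> Good T T0 n f g' \<and> N2 (\<lambda>z. g z - g' z) < ennreal e"
  shows "Good T T0 n f g"
  unfolding Good_def
proof (rule enn_lim0)
  fix e :: real assume e: "e > 0"
  define eps where "eps = e / 8"
  have eps: "eps > 0" using e by (simp add: eps_def)
  have le: "8 * 1 * eps \<le> e" by (simp add: eps_def)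
  obtain g' where g': "L2 g'" "Good T T0 n f g'" "N2 (\<lambda>z. g z - g' z) < ennreal eps"
    using approx[OF eps] by blast
  have d: "L2 (\<lambda>z. g z - g' z)" using L2_diff[OF g g'(3)] g'(1) by (simp add: L2_def)
  have lf: "L2 f" using L2_bounded f by auto
  have "Q T T0 (n k) f g \<le> 2 * Q T T0 (n k) f g' + ennreal e" for k
  proof -
    have "Q T T0 (n k) f g = Q T T0 (n k) f (\<lambda>z. g' z + (g z - g' z))" by simp
    also have "\<dots> \<le> 2 * Q T T0 (n k) f g' + 2 * Q T T0 (n k) f (\<lambda>z. g z - g' z)"
      by (rule Q_add_g[OF T lf g'(1) d])
    also have "2 * Q T T0 (n k) f (\<lambda>z. g z - g' z) \<le> ennreal e"
    proof (rule eight_le[of 1, OF _ less_imp_le[OF eps] le])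
      have "Q T T0 (n k) f (\<lambda>z. g z - g' z) \<le> 4 * N2 (\<lambda>z. g z - g' z)"
        by (rule Q_bnd_g[OF T f d])
      also have "\<dots> \<le> 4 * (ennreal 1 * ennreal eps)"
        using g'(3) by (intro mult_left_mono) auto
      finally show "Q T T0 (n k) f (\<lambda>z. g z - g' z) \<le> 4 * (ennreal 1 * ennreal eps)" .
    qed simp
    finally show ?thesis by simp
  qed
  then show "\<exists>c. c \<longlonglongrightarrow> 0 \<and> (\<forall>k. Q T T0 (n k) f g \<le> 2 * c k + ennreal e)"
    using g'(2) unfolding Good_def by blast
qed

lemma ind_meas: assumes [measurable]: "E \<in> sets Zsp" shows "(\<lambda>z. indicator E z :: complex) \<in> borel_measurable Zsp"
  by measurable

lemma ind_le1: "cmod (indicator E z :: complex) \<le> 1"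
  by (simp add: indicator_def)

lemma L2_ind: "E \<in> sets Zsp \<Longrightarrow> L2 (\<lambda>z. indicator E z :: complex)"
  using L2_bounded[OF ind_meas ind_le1] by auto

lemma N2_ind_diff:
  assumes "E \<in> sets Zsp" "A \<in> sets Zsp"
  shows "N2 (\<lambda>z. indicator E z - indicator A z :: complex) = emeasure Zsp ((E - A) \<union> (A - E))"
proof -
  have "N2 (\<lambda>z. indicator E z - indicator A z :: complex) = (\<integral>\<^sup>+z. indicator ((E - A) \<union> (A - E)) z \<partial>Zsp)"
    unfolding N2_def by (intro nn_integral_cong) (auto simp: indicator_def)
  also have "\<dots> = emeasure Zsp ((E - A) \<union> (A - E))" using assms by (intro nn_integral_indicator) auto
  finally show ?thesis .
qed

lemma L2_add:
  assumes "L2 f1" "L2 f2" shows "L2 (\<lambda>z. f1 z + f2 z)"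
proof -
  have "N2 (\<lambda>z. f1 z + f2 z) \<le> 2 * N2 f1 + 2 * N2 f2"
    unfolding N2_def by (rule nn_sq_split) (use assms in \<open>auto simp: L2_def\<close>)
  also have "\<dots> < \<infinity>" using assms by (simp add: L2_def ennreal_mult_less_top)
  finally have "N2 (\<lambda>z. f1 z + f2 z) < \<infinity>" .
  moreover have "(\<lambda>z. f1 z + f2 z) \<in> borel_measurable Zsp"
    using assms by (intro borel_measurable_add) (auto simp: L2_def)
  ultimately show ?thesis by (simp add: L2_def)
qed

lemma L2_smult:
  assumes "L2 f" shows "L2 (\<lambda>z. c * f z)"
proof -
  have "N2 (\<lambda>z. c * f z) = ennreal ((cmod c)\<^sup>2) * N2 f"
    unfolding N2_def using assms
    by (subst nn_integral_cmult[symmetric]) (auto simp: L2_def norm_mult power_mult_distrib ennreal_mult)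
  also have "\<dots> < \<infinity>" using assms by (simp add: L2_def ennreal_mult_less_top)
  finally have "N2 (\<lambda>z. c * f z) < \<infinity>" .
  moreover have "(\<lambda>z. c * f z) \<in> borel_measurable Zsp"
    using assms by (intro borel_measurable_times borel_measurable_const) (auto simp: L2_def)
  ultimately show ?thesis by (simp add: L2_def)
qed

lemma L2_zero: "L2 (\<lambda>z. 0)"
  by (simp add: L2_def N2_def)

lemma simple_repr:
  fixes F :: "_ \<Rightarrow> complex"
  assumes "simple_function M F" "z \<in> space M"
  shows "F z = (\<Sum>v\<in>F ` space M. v * indicator (F -` {v} \<inter> space M) z)"
proof -
  have fin: "finite (F ` space M)" using assms(1) by (simp add: simple_function_def)
  have "(\<Sum>v\<in>F ` space M. v * indicator (F -` {v} \<inter> space M) z) = (\<Sum>v\<in>F ` space M. if v = F z then v else 0)"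
    using assms(2) by (intro sum.cong) (auto simp: indicator_def)
  also have "\<dots> = F z" using fin assms(2) by (simp add: sum.delta')
  finally show ?thesis by simp
qed

lemma L2_approx_simple:
  assumes f: "L2 f" and e: "e > 0"
  shows "\<exists>F. simple_function Zsp F \<and> N2 (\<lambda>z. f z - F z) < ennreal e"
proof -
  have fm[measurable]: "f \<in> borel_measurable Zsp" using f by (simp add: L2_def)
  obtain F where F: "\<And>i. simple_function Zsp (F i)" "\<And>x. x \<in> space Zsp \<Longrightarrow> (\<lambda>i. F i x) \<longlonglongrightarrow> f x"
    "\<And>i x. x \<in> space Zsp \<Longrightarrow> dist (F i x) 0 \<le> 2 * dist (f x) 0"
    using borel_measurable_implies_sequence_metric[OF fm, of 0] by blast
  have Fm[measurable]: "F i \<in> borel_measurable Zsp" for i using F(1) by (rule borel_measurable_simple_function)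
  define h where "h i z = (cmod (f z - F i z))\<^sup>2" for i z
  define w where "w z = 9 * (cmod (f z))\<^sup>2" for z
  have "integrable Zsp (\<lambda>z. (cmod (f z))\<^sup>2)"
    using f integrable_sq_iff[OF fm] by (simp add: L2_def N2_def)
  then have iw: "integrable Zsp w" unfolding w_def by (rule integrable_mult_right)
  have hm[measurable]: "h i \<in> borel_measurable Zsp" for i unfolding h_def by measurable
  have bnd: "norm (h i z) \<le> w z" if z: "z \<in> space Zsp" for i z
  proof -
    have "cmod (f z - F i z) \<le> cmod (f z) + cmod (F i z)" by (rule norm_triangle_ineq4)
    also have "\<dots> \<le> 3 * cmod (f z)" using F(3)[OF z, of i] by (simp add: dist_norm)
    finally have "(cmod (f z - F i z))\<^sup>2 \<le> (3 * cmod (f z))\<^sup>2" by (intro power_mono) auto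
    then show ?thesis by (simp add: h_def w_def power_mult_distrib)
  qed
  have ih: "integrable Zsp (h i)" for i
    by (rule Bochner_Integration.integrable_bound[OF iw hm]) (use bnd in \<open>auto intro!: AE_I2 simp: w_def\<close>)
  have lim: "(\<lambda>i. integral\<^sup>L Zsp (h i)) \<longlonglongrightarrow> integral\<^sup>L Zsp (\<lambda>z. 0)"
  proof (rule integral_dominated_convergence[OF _ hm iw])
    show "AE x in Zsp. (\<lambda>i. h i x) \<longlonglongrightarrow> 0"
    proof (rule AE_I2)
      fix x assume x: "x \<in> space Zsp"
      have "(\<lambda>i. (cmod (f x - F i x))\<^sup>2) \<longlonglongrightarrow> (cmod (f x - f x))\<^sup>2"
        by (intro tendsto_intros F(2)[OF x])
      then show "(\<lambda>i. h i x) \<longlonglongrightarrow> 0" by (simp add: h_def)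
    qed
    show "AE x in Zsp. norm (h i x) \<le> w x" for i using bnd by (intro AE_I2) auto
  qed simp
  then have "eventually (\<lambda>i. integral\<^sup>L Zsp (h i) < e) sequentially"
    using e by (simp add: order_tendstoD(2))
  then obtain i0 where "\<forall>i\<ge>i0. integral\<^sup>L Zsp (h i) < e" by (auto simp: eventually_sequentially)
  then have i: "integral\<^sup>L Zsp (h i0) < e" by simp
  have "N2 (\<lambda>z. f z - F i0 z) = ennreal (integral\<^sup>L Zsp (h i0))"
  proof -
    have "N2 (\<lambda>z. f z - F i0 z) = (\<integral>\<^sup>+z. ennreal (h i0 z) \<partial>Zsp)" by (simp add: N2_def h_def)
    also have "\<dots> = ennreal (integral\<^sup>L Zsp (h i0))" by (intro nn_integral_eq_integral[OF ih]) (auto simp: h_def)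
    finally show ?thesis .
  qed
  also have "\<dots> < ennreal e" using i e by (intro ennreal_lessI) auto
  finally show ?thesis using F(1)[of i0] by blast
qed

lemma L2_ext:
  fixes P :: "(real \<times> real \<Rightarrow> complex) \<Rightarrow> bool"
  assumes A: "\<AA> \<subseteq> sets Zsp"
  and approxA: "\<And>E e. E \<in> sets Zsp \<Longrightarrow> e > 0 \<Longrightarrow> \<exists>A\<in>\<AA>. emeasure Zsp ((E - A) \<union> (A - E)) < ennreal e"
  and ind: "\<And>A. A \<in> \<AA> \<Longrightarrow> P (\<lambda>z. indicator A z)"
  and add: "\<And>f1 f2. L2 f1 \<Longrightarrow> L2 f2 \<Longrightarrow> P f1 \<Longrightarrow> P f2 \<Longrightarrow> P (\<lambda>z. f1 z + f2 z)"
  and smult: "\<And>f c. L2 f \<Longrightarrow> P f \<Longrightarrow> P (\<lambda>z. c * f z)"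
  and close: "\<And>f. L2 f \<Longrightarrow> (\<And>e. e > 0 \<Longrightarrow> \<exists>f'. L2 f' \<and> P f' \<and> N2 (\<lambda>z. f z - f' z) < ennreal e) \<Longrightarrow> P f"
  and f: "L2 f"
  shows "P f"
proof -
  have a: "P (\<lambda>z. indicator E z)" if E: "E \<in> sets Zsp" for E
  proof (rule close[OF L2_ind[OF E]])
    fix e :: real assume "e > 0"
    then obtain A where "A \<in> \<AA>" "emeasure Zsp ((E - A) \<union> (A - E)) < ennreal e" using approxA[OF E] by blast
    then show "\<exists>f'. L2 f' \<and> P f' \<and> N2 (\<lambda>z. indicator E z - f' z) < ennreal e"
      using A E by (intro exI[of _ "\<lambda>z. indicator A z"]) (auto simp: N2_ind_diff L2_ind ind)
  qed
  have b: "P (\<lambda>z. \<Sum>j\<in>J. c j * indicator (E j) z) \<and> L2 (\<lambda>z. \<Sum>j\<in>J. c j * indicator (E j) z)"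
    if "finite J" "\<forall>j\<in>J. E j \<in> sets Zsp" for J :: "complex set" and c E
    using that
  proof (induction J rule: finite_induct)
    case empty
    have "P (\<lambda>z. 0 * indicator {} z)" using smult[OF L2_ind[OF sets.empty_sets] a[OF sets.empty_sets], of 0] .
    then show ?case by (simp add: L2_zero)
  next
    case (insert j J)
    then have IH: "P (\<lambda>z. \<Sum>j\<in>J. c j * indicator (E j) z)" "L2 (\<lambda>z. \<Sum>j\<in>J. c j * indicator (E j) z)"
      and Ej: "E j \<in> sets Zsp" by auto
    have l1: "L2 (\<lambda>z. c j * indicator (E j) z)" using L2_smult[OF L2_ind[OF Ej]] by simp
    have p1: "P (\<lambda>z. c j * indicator (E j) z)" using smult[OF L2_ind[OF Ej] a[OF Ej]] by simp
    have eq: "(\<lambda>z. \<Sum>j\<in>insert j J. c j * indicator (E j) z) = (\<lambda>z. c j * indicator (E j) z + (\<Sum>j\<in>J. c j * indicator (E j) z))"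
      using insert(1,2) by (intro ext) (rule sum.insert)
    show ?case unfolding eq using add[OF l1 IH(2) p1 IH(1)] L2_add[OF l1 IH(2)] by blast
  qed
  show ?thesis
  proof (rule close[OF f])
    fix e :: real assume e: "e > 0"
    obtain F where F: "simple_function Zsp F" "N2 (\<lambda>z. f z - F z) < ennreal e"
      using L2_approx_simple[OF f e] by blast
    define s where "s z = (\<Sum>v\<in>F ` space Zsp. v * indicator (F -` {v} \<inter> space Zsp) z)" for z
    have fin: "finite (F ` space Zsp)" using F(1) by (simp add: simple_function_def)
    have sets: "\<forall>v\<in>F ` space Zsp. F -` {v} \<inter> space Zsp \<in> sets Zsp"
      by (intro ballI simple_functionD(2)[OF F(1)])
    have Ps: "P s \<and> L2 s" unfolding s_def[abs_def] by (rule b[OF fin sets, of "\<lambda>v. v"])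
    have sF: "s z = F z" if "z \<in> space Zsp" for z
      unfolding s_def by (rule simple_repr[OF F(1) that, symmetric])
    have "N2 (\<lambda>z. f z - s z) = N2 (\<lambda>z. f z - F z)"
      unfolding N2_def by (intro nn_integral_cong) (simp only: sF)
    then show "\<exists>f'. L2 f' \<and> P f' \<and> N2 (\<lambda>z. f z - f' z) < ennreal e"
      using Ps F(2) by (intro exI[of _ s]) auto
  qed
qed

lemma L2ZX_L2:
  assumes "f \<in> L2ZX"
  shows "L2 f" and "\<exists>C. 0 \<le> C \<and> (AE x in I01. Sec f x \<le> ennreal C)"
proof -
  show "L2 f" using assms integrable_sq_iff[of f Zsp] by (auto simp: L2ZX_def L2_def N2_def)
  obtain C where "AE x in I01. (\<integral>\<^sup>+ y. ennreal ((cmod (f (x, y)))\<^sup>2) \<partial>I01) \<le> ennreal C"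
    using assms by (auto simp: L2ZX_def)
  then have "AE x in I01. Sec f x \<le> ennreal (max C 0)"
    by eventually_elim (simp add: Sec_def order_trans[OF _ ennreal_leI[OF max.cobounded1]])
  then show "\<exists>C. 0 \<le> C \<and> (AE x in I01. Sec f x \<le> ennreal C)" by (intro exI[of _ "max C 0"]) auto
qed

theorem dense_good:
  assumes T: "mpz T Zsp" "mpz T0 I01"
  and A: "\<AA> \<subseteq> sets Zsp"
  and approxA: "\<And>E e. E \<in> sets Zsp \<Longrightarrow> e > 0 \<Longrightarrow> \<exists>A\<in>\<AA>. emeasure Zsp ((E - A) \<union> (A - E)) < ennreal e"
  and good: "\<And>A B. A \<in> \<AA> \<Longrightarrow> B \<in> \<AA> \<Longrightarrow> Good T T0 n (\<lambda>z. indicator A z) (\<lambda>z. indicator B z)"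
  and f: "f \<in> L2ZX" and g: "g \<in> L2ZX"
  shows "Good T T0 n f g"
proof -
  have step1: "Good T T0 n (\<lambda>z. indicator A z) h" if Ah: "A \<in> \<AA>" "L2 h" for A h
  proof -
    have Az: "A \<in> sets Zsp" using A Ah by auto
    note fm = ind_meas[OF Az] and fb = ind_le1[of A]
    show ?thesis
    proof (rule L2_ext[OF A approxA, where P="Good T T0 n (\<lambda>z. indicator A z)"])
      show "Good T T0 n (\<lambda>z. indicator A z) (\<lambda>z. indicator B z)" if "B \<in> \<AA>" for B
        using good[OF Ah(1) that] .
      show "Good T T0 n (\<lambda>z. indicator A z) (\<lambda>z. f1 z + f2 z)"
        if "L2 f1" "L2 f2" "Good T T0 n (\<lambda>z. indicator A z) f1" "Good T T0 n (\<lambda>z. indicator A z) f2" for f1 f2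
        by (rule Good_add_g[OF T L2_ind[OF Az] that])
      show "Good T T0 n (\<lambda>z. indicator A z) (\<lambda>z. c * f1 z)"
        if "L2 f1" "Good T T0 n (\<lambda>z. indicator A z) f1" for f1 c
        by (rule Good_smult_g[OF T fm L2_meas[OF that(1)] that(2)])
      show "Good T T0 n (\<lambda>z. indicator A z) f1"
        if "L2 f1" "\<And>e. e > 0 \<Longrightarrow> \<exists>f'. L2 f' \<and> Good T T0 n (\<lambda>z. indicator A z) f' \<and> N2 (\<lambda>z. f1 z - f' z) < ennreal e" for f1
        by (rule Good_close_g[OF T fm fb that(1) that(2)])
    qed (use Ah in auto)
  qed
  obtain C where C: "0 \<le> C" "AE x in I01. Sec g x \<le> ennreal C" using L2ZX_L2(2)[OF g] by blast
  have lg: "L2 g" using L2ZX_L2(1)[OF g] .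
  show ?thesis
  proof (rule L2_ext[OF A approxA, where P="\<lambda>f. Good T T0 n f g"])
    show "Good T T0 n (\<lambda>z. indicator B z) g" if "B \<in> \<AA>" for B
      using step1[OF that lg] .
    show "Good T T0 n (\<lambda>z. f1 z + f2 z) g"
      if "L2 f1" "L2 f2" "Good T T0 n f1 g" "Good T T0 n f2 g" for f1 f2
      by (rule Good_add_f[OF T that(1,2) lg that(3,4)])
    show "Good T T0 n (\<lambda>z. c * f1 z) g" if "L2 f1" "Good T T0 n f1 g" for f1 c
      by (rule Good_smult_f[OF T L2_meas[OF that(1)] L2_meas[OF lg] that(2)])
    show "Good T T0 n f1 g"
      if "L2 f1" "\<And>e. e > 0 \<Longrightarrow> \<exists>f'. L2 f' \<and> Good T T0 n f' g \<and> N2 (\<lambda>z. f1 z - f' z) < ennreal e" for f1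
      by (rule Good_close_f[OF T that(1) lg C that(2)])
  qed (use L2ZX_L2(1)[OF f] in auto)
qed

lemma fin_union_in:
  fixes n :: nat
  assumes "{} \<in> \<AA>" "\<And>a b. a \<in> \<AA> \<Longrightarrow> b \<in> \<AA> \<Longrightarrow> a \<union> b \<in> \<AA>" "\<And>i. a i \<in> \<AA>"
  shows "(\<Union>i<n. a i) \<in> \<AA>"
proof (induction n)
  case 0 then show ?case using assms(1) by simp
next
  case (Suc n)
  have "(\<Union>i<Suc n. a i) = a n \<union> (\<Union>i<n. a i)" by (auto simp: lessThan_Suc)
  then show ?case using assms(2)[OF assms(3) Suc] by simp
qed

lemma approx_sigma:
  assumes fm: "finite_measure M"
    and AS: "\<AA> \<subseteq> sets M" and Ac: "\<And>a. a \<in> \<AA> \<Longrightarrow> space M - a \<in> \<AA>"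
    and Au: "\<And>a b. a \<in> \<AA> \<Longrightarrow> b \<in> \<AA> \<Longrightarrow> a \<union> b \<in> \<AA>" and A0: "{} \<in> \<AA>"
    and E: "E \<in> sigma_sets (space M) G" and GS: "G \<subseteq> sets M"
    and Gap: "\<And>g e. g \<in> G \<Longrightarrow> e > 0 \<Longrightarrow> \<exists>a\<in>\<AA>. measure M ((g - a) \<union> (a - g)) < e"
  shows "E \<in> sets M \<and> (\<forall>e>0. \<exists>a\<in>\<AA>. measure M ((E - a) \<union> (a - E)) < e)"
  using E
proof induction
  case (Basic g)
  then show ?case using GS Gap by auto
next
  case Empty
  then show ?case using A0 by (intro conjI allI impI bexI[of _ "{}"]) auto
next
  case (Compl a)
  have aS: "a \<in> sets M" using Compl by auto
  show ?case
  proof (intro conjI allI impI)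
    show "space M - a \<in> sets M" using aS by auto
    fix e :: real assume "e > 0"
    then obtain b where b: "b \<in> \<AA>" "measure M ((a - b) \<union> (b - a)) < e" using Compl by auto
    have "b \<in> sets M" using b AS by auto
    then have "((space M - a) - (space M - b)) \<union> ((space M - b) - (space M - a)) = (a - b) \<union> (b - a)"
      using aS sets.sets_into_space by blast
    then show "\<exists>c\<in>\<AA>. measure M (((space M - a) - c) \<union> (c - (space M - a))) < e"
      using b Ac by (intro bexI[of _ "space M - b"]) auto
  qed
next
  case (Union A)
  interpret finite_measure M by (rule fm)
  have AiS: "A i \<in> sets M" for i using Union by auto
  have US: "(\<Union>(range A)) \<in> sets M" using AiS by auto
  show ?case
  proof (intro conjI allI impI US)
    fix e :: real assume e: "e > 0"
    define B where "B n = (\<Union>i<n. A i)" for n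
    have BS: "B n \<in> sets M" for n using AiS by (auto simp: B_def)
    have inc: "incseq B" unfolding B_def by (intro monoI UN_mono) auto
    have UB: "(\<Union>n. B n) = \<Union>(range A)" unfolding B_def by auto
    have "(\<lambda>n. measure M (B n)) \<longlonglongrightarrow> measure M (\<Union>(range A))"
      using finite_Lim_measure_incseq[of B] BS inc UB by auto
    then have "eventually (\<lambda>n. measure M (\<Union>(range A)) - e/2 < measure M (B n)) sequentially"
      using e by (intro order_tendstoD(1)) auto
    then obtain n where n: "measure M (\<Union>(range A)) - e/2 < measure M (B n)"
      by (auto simp: eventually_sequentially)
    define d where "d = e / (2 * (real n + 1))"
    have d: "d > 0" using e by (simp add: d_def)
    have "\<forall>i. \<exists>a. a \<in> \<AA> \<and> measure M ((A i - a) \<union> (a - A i)) < d" using Union d by blast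
    then obtain a where a: "\<And>i. a i \<in> \<AA>" "\<And>i. measure M ((A i - a i) \<union> (a i - A i)) < d" by metis
    have aS: "a i \<in> sets M" for i using a AS by auto
    define c where "c = (\<Union>i<n. a i)"
    have cA: "c \<in> \<AA>" unfolding c_def by (rule fin_union_in[OF A0 Au a(1)])
    have cS: "c \<in> sets M" using cA AS by auto
    have sub: "(\<Union>(range A) - c) \<union> (c - \<Union>(range A)) \<subseteq> (\<Union>(range A) - B n) \<union> (\<Union>i<n. (A i - a i) \<union> (a i - A i))"
      unfolding B_def c_def by blast
    have "measure M ((\<Union>(range A) - c) \<union> (c - \<Union>(range A))) \<le> measure M ((\<Union>(range A) - B n) \<union> (\<Union>i<n. (A i - a i) \<union> (a i - A i)))"
      using sub AiS aS BS US by (intro finite_measure_mono) auto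
    also have "\<dots> \<le> measure M (\<Union>(range A) - B n) + measure M (\<Union>i<n. (A i - a i) \<union> (a i - A i))"
      using AiS aS BS US by (intro measure_Un_le) auto
    also have "measure M (\<Union>(range A) - B n) = measure M (\<Union>(range A)) - measure M (B n)"
      using US BS by (intro finite_measure_Diff) (auto simp: B_def)
    also have "measure M (\<Union>i<n. (A i - a i) \<union> (a i - A i)) \<le> (\<Sum>i<n. measure M ((A i - a i) \<union> (a i - A i)))"
      using AiS aS by (intro finite_measure_subadditive_finite) auto
    also have "\<dots> \<le> (\<Sum>i<n. d)" using a(2) by (intro sum_mono less_imp_le) auto
    also have "\<dots> = real n * d" by simp
    finally have "measure M ((\<Union>(range A) - c) \<union> (c - \<Union>(range A))) \<le> measure M (\<Union>(range A)) - measure M (B n) + real n * d"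
      by simp
    moreover have "real n * d \<le> e / 2"
    proof -
      have "real n * d = e / 2 * (real n / (real n + 1))" by (simp add: d_def field_simps)
      also have "\<dots> \<le> e / 2 * 1" using e by (intro mult_left_mono) auto
      finally show ?thesis by simp
    qed
    ultimately show "\<exists>c\<in>\<AA>. measure M ((\<Union>(range A) - c) \<union> (c - \<Union>(range A))) < e"
      using n cA by (intro bexI[of _ c]) auto
  qed
qed

fun lev :: "'a set \<Rightarrow> 'a set set \<Rightarrow> nat \<Rightarrow> 'a set set" where
  "lev \<Omega> G 0 = insert {} G"
| "lev \<Omega> G (Suc n) = lev \<Omega> G n \<union> (\<lambda>a. \<Omega> - a) ` lev \<Omega> G n \<union> (\<lambda>p. fst p \<union> snd p) ` (lev \<Omega> G n \<times> lev \<Omega> G n)"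

definition alg :: "'a set \<Rightarrow> 'a set set \<Rightarrow> 'a set set" where
  "alg \<Omega> G = (\<Union>n. lev \<Omega> G n)"

lemma lev_mono: "m \<le> n \<Longrightarrow> lev \<Omega> G m \<subseteq> lev \<Omega> G n"
  by (rule lift_Suc_mono_le[of "lev \<Omega> G"]) auto

lemma alg_G: "G \<subseteq> alg \<Omega> G"
  unfolding alg_def using lev.simps(1)[of \<Omega> G] by blast

lemma alg_empty: "{} \<in> alg \<Omega> G"
  unfolding alg_def using lev.simps(1)[of \<Omega> G] by blast

lemma alg_compl: "a \<in> alg \<Omega> G \<Longrightarrow> \<Omega> - a \<in> alg \<Omega> G"
  unfolding alg_def
proof -
  assume "a \<in> (\<Union>n. lev \<Omega> G n)"
  then obtain n where "a \<in> lev \<Omega> G n" by auto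
  then have "\<Omega> - a \<in> lev \<Omega> G (Suc n)" by simp
  then show "\<Omega> - a \<in> (\<Union>n. lev \<Omega> G n)" by blast
qed

lemma alg_un: "a \<in> alg \<Omega> G \<Longrightarrow> b \<in> alg \<Omega> G \<Longrightarrow> a \<union> b \<in> alg \<Omega> G"
  unfolding alg_def
proof -
  assume "a \<in> (\<Union>n. lev \<Omega> G n)" "b \<in> (\<Union>n. lev \<Omega> G n)"
  then obtain m k where "a \<in> lev \<Omega> G m" "b \<in> lev \<Omega> G k" by auto
  then have "a \<in> lev \<Omega> G (max m k)" "b \<in> lev \<Omega> G (max m k)"
    using lev_mono[of m "max m k" \<Omega> G] lev_mono[of k "max m k" \<Omega> G] by auto
  then have "a \<union> b \<in> (\<lambda>p. fst p \<union> snd p) ` (lev \<Omega> G (max m k) \<times> lev \<Omega> G (max m k))"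
    by (intro image_eqI[of _ _ "(a,b)"]) auto
  then have "a \<union> b \<in> lev \<Omega> G (Suc (max m k))" unfolding lev.simps(2) by blast
  then show "a \<union> b \<in> (\<Union>n. lev \<Omega> G n)" by blast
qed

lemma alg_countable: "countable G \<Longrightarrow> countable (alg \<Omega> G)"
proof -
  assume G: "countable G"
  have "countable (lev \<Omega> G n)" for n
    by (induction n) (auto simp: G intro!: countable_image countable_SIGMA)
  then show ?thesis unfolding alg_def by auto
qed

lemma alg_sets: "G \<subseteq> sets M \<Longrightarrow> alg (space M) G \<subseteq> sets M"
proof -
  assume G: "G \<subseteq> sets M"
  have "lev (space M) G n \<subseteq> sets M" for n
  proof (induction n)
    case 0 then show ?case using G by simp
  next
    case (Suc n)
    have h: "a \<in> sets M" if "a \<in> lev (space M) G n" for a using Suc that by blast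
    show ?case
    proof
      fix x assume "x \<in> lev (space M) G (Suc n)"
      then show "x \<in> sets M" using h by (auto intro!: sets.Un sets.compl_sets)
    qed
  qed
  then show ?thesis unfolding alg_def by auto
qed

definition A1 :: "real set set" where
  "A1 = alg {0..1} ((\<lambda>q. {0..1} \<inter> {..<real_of_rat q}) ` UNIV)"

lemma sets_borel_Iio: "sets (borel :: real measure) = sigma_sets UNIV (range lessThan)"
  by (subst borel_Iio) (simp add: sets_measure_of)

lemma sets_I01_gen: "sets I01 = sigma_sets {0..1} ((\<inter>) {0..1} ` range lessThan)"
proof -
  have "sets I01 = (\<inter>) {0..1} ` sets (borel :: real measure)"
    unfolding sets_I01 sets_restrict_space by simp
  also have "\<dots> = sigma_sets {0..1} ((\<inter>) {0..1} ` range lessThan)"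
  proof -
    have "{0..1::real} \<in> sigma_sets UNIV (range lessThan)" using sets_borel_Iio[symmetric] by (simp only:) simp
    then show ?thesis unfolding sets_borel_Iio by (rule sigma_sets_Int) simp
  qed
  finally show ?thesis .
qed

lemma A1_sets: "A1 \<subseteq> sets I01"
proof -
  have "(\<lambda>q. {0..1} \<inter> {..<real_of_rat q}) ` UNIV \<subseteq> sets I01"
    unfolding sets_I01_gen by (auto intro: sigma_sets.Basic)
  then show ?thesis unfolding A1_def using alg_sets[of _ I01] by simp
qed

lemma A1_countable: "countable A1"
  unfolding A1_def by (intro alg_countable countable_image) simp

lemma measure_I01_le:
  assumes "X \<in> sets I01" "X \<subseteq> {l..u}" "l \<le> u"
  shows "measure I01 X \<le> u - l"
proof -
  have "emeasure I01 X = emeasure lborel X" using assms by (simp add: emeasure_I01)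
  also have "\<dots> \<le> emeasure lborel {l..u}" using assms by (intro emeasure_mono) auto
  also have "\<dots> = ennreal (u - l)" using assms by simp
  finally show ?thesis using assms by (simp add: measure_def enn2real_leI)
qed

lemma A1_approx:
  assumes "E \<in> sets I01" "e > 0"
  shows "\<exists>a\<in>A1. measure I01 ((E - a) \<union> (a - E)) < e"
proof -
  have r: "E \<in> sets I01 \<and> (\<forall>e>0. \<exists>a\<in>A1. measure I01 ((E - a) \<union> (a - E)) < e)"
  proof (rule approx_sigma[OF fm_I01 A1_sets _ _ _ _ _])
    show "\<And>a. a \<in> A1 \<Longrightarrow> space I01 - a \<in> A1" unfolding A1_def by (simp add: alg_compl)
    show "\<And>a b. a \<in> A1 \<Longrightarrow> b \<in> A1 \<Longrightarrow> a \<union> b \<in> A1" unfolding A1_def by (simp add: alg_un)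
    show "{} \<in> A1" unfolding A1_def by (simp add: alg_empty)
    show "E \<in> sigma_sets (space I01) ((\<inter>) {0..1} ` range lessThan)" using assms(1) unfolding sets_I01_gen by simp
    show "(\<inter>) {0..1} ` range lessThan \<subseteq> sets I01" unfolding sets_I01_gen using sigma_sets.Basic by blast
    fix g :: "real set" and d :: real assume g: "g \<in> (\<inter>) {0..1} ` range lessThan" and d: "d > 0"
    then obtain a :: real where ga: "g = {0..1} \<inter> {..<a}" by auto
    obtain r :: real where r: "r \<in> \<rat>" "a < r" "r < a + d" using Rats_dense_in_real[of a "a + d"] d by auto
    then obtain q where q: "r = real_of_rat q" by (auto elim: Rats_cases)
    have gS: "g \<in> sets I01" unfolding sets_I01_gen using g by (rule sigma_sets.Basic)
    have qS: "{0..1} \<inter> {..<r} \<in> sets I01" unfolding sets_I01_gen by (rule sigma_sets.Basic) simp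
    have "measure I01 ((g - {0..1} \<inter> {..<r}) \<union> ({0..1} \<inter> {..<r} - g)) \<le> r - a"
      using gS qS r unfolding ga by (intro measure_I01_le sets.Un sets.Diff) auto
    also have "\<dots> < d" using r by simp
    finally have "measure I01 ((g - {0..1} \<inter> {..<r}) \<union> ({0..1} \<inter> {..<r} - g)) < d" .
    moreover have "{0..1} \<inter> {..<r} \<in> A1" unfolding A1_def q by (rule subsetD[OF alg_G]) simp
    ultimately show "\<exists>a\<in>A1. measure I01 ((g - a) \<union> (a - g)) < d" by blast
  qed
  then show ?thesis using assms(2) by blast
qed

definition A2 :: "(real \<times> real) set set" where
  "A2 = alg ({0..1} \<times> {0..1}) ((\<lambda>p. fst p \<times> snd p) ` (A1 \<times> A1))"

lemma measure_Zsp_Times: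
  assumes "X \<in> sets I01" "Y \<in> sets I01"
  shows "measure Zsp (X \<times> Y) = measure I01 X * measure I01 Y"
  unfolding measure_def Zsp_def
  using sigma_finite_measure.emeasure_pair_measure_Times[OF sf_I01 assms]
  by (simp add: enn2real_mult)

lemma Times_sets: "X \<in> sets I01 \<Longrightarrow> Y \<in> sets I01 \<Longrightarrow> X \<times> Y \<in> sets Zsp"
  unfolding Zsp_def by (rule pair_measureI)

lemma A2_sets: "A2 \<subseteq> sets Zsp"
proof -
  have "(\<lambda>p. fst p \<times> snd p) ` (A1 \<times> A1) \<subseteq> sets Zsp"
    using A1_sets by (auto intro!: Times_sets)
  then show ?thesis unfolding A2_def using alg_sets[of _ Zsp] by simp
qed

lemma A2_countable: "countable A2"
  unfolding A2_def using A1_countable by (intro alg_countable countable_image countable_SIGMA) auto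

lemma A2_approx:
  assumes "E \<in> sets Zsp" "e > 0"
  shows "\<exists>a\<in>A2. emeasure Zsp ((E - a) \<union> (a - E)) < ennreal e"
proof -
  interpret F: finite_measure Zsp by (rule fm_Zsp)
  interpret F1: finite_measure I01 by (rule fm_I01)
  let ?G = "{a \<times> b | a b. a \<in> sets I01 \<and> b \<in> sets I01}"
  have r: "E \<in> sets Zsp \<and> (\<forall>e>0. \<exists>a\<in>A2. measure Zsp ((E - a) \<union> (a - E)) < e)"
  proof (rule approx_sigma[OF fm_Zsp A2_sets _ _ _ _ _])
    show "\<And>a. a \<in> A2 \<Longrightarrow> space Zsp - a \<in> A2" unfolding A2_def by (simp add: alg_compl)
    show "\<And>a b. a \<in> A2 \<Longrightarrow> b \<in> A2 \<Longrightarrow> a \<union> b \<in> A2" unfolding A2_def by (simp add: alg_un)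
    show "{} \<in> A2" unfolding A2_def by (simp add: alg_empty)
    show "E \<in> sigma_sets (space Zsp) ?G"
      using assms(1) unfolding Zsp_def sets_pair_measure space_pair_measure .
    show "?G \<subseteq> sets Zsp" using Times_sets by blast
    fix g :: "(real \<times> real) set" and d :: real assume g: "g \<in> ?G" and d: "d > 0"
    then obtain a b where gab: "g = a \<times> b" and ab: "a \<in> sets I01" "b \<in> sets I01" by blast
    obtain a' where a': "a' \<in> A1" "measure I01 ((a - a') \<union> (a' - a)) < d/2"
      using A1_approx[OF ab(1), of "d/2"] d by auto
    obtain b' where b': "b' \<in> A1" "measure I01 ((b - b') \<union> (b' - b)) < d/2"
      using A1_approx[OF ab(2), of "d/2"] d by auto
    have a'S: "a' \<in> sets I01" and b'S: "b' \<in> sets I01" using a'(1) b'(1) A1_sets by auto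
    have sp: "a \<subseteq> {0..1}" "b \<subseteq> {0..1}" "a' \<subseteq> {0..1}" "b' \<subseteq> {0..1}"
      using ab a'S b'S sets.sets_into_space[of _ I01] by auto
    define Da where "Da = (a - a') \<union> (a' - a)"
    define Db where "Db = (b - b') \<union> (b' - b)"
    have DaS: "Da \<in> sets I01" unfolding Da_def using ab a'S by (intro sets.Un sets.Diff)
    have DbS: "Db \<in> sets I01" unfolding Db_def using ab b'S by (intro sets.Un sets.Diff)
    have I1: "{0..1} \<in> sets I01" using sets.top[of I01] by simp
    have sub: "((a \<times> b) - (a' \<times> b')) \<union> ((a' \<times> b') - (a \<times> b)) \<subseteq> (Da \<times> {0..1}) \<union> ({0..1} \<times> Db)"
      using sp unfolding Da_def Db_def by blast
    have m1: "measure I01 {0..1} = 1" using prob_space.prob_space[OF prob_I01] by simp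
    have "measure Zsp (((a \<times> b) - (a' \<times> b')) \<union> ((a' \<times> b') - (a \<times> b))) \<le> measure Zsp ((Da \<times> {0..1}) \<union> ({0..1} \<times> Db))"
      using sub DaS DbS I1 by (intro F.finite_measure_mono sets.Un Times_sets)
    also have "\<dots> \<le> measure Zsp (Da \<times> {0..1}) + measure Zsp ({0..1} \<times> Db)"
      using DaS DbS I1 by (intro measure_Un_le Times_sets)
    also have "\<dots> = measure I01 Da + measure I01 Db"
      using DaS DbS I1 m1 by (simp add: measure_Zsp_Times)
    also have "\<dots> < d" using a'(2) b'(2) unfolding Da_def Db_def by simp
    finally have "measure Zsp ((g - a' \<times> b') \<union> (a' \<times> b' - g)) < d" unfolding gab .
    moreover have "a' \<times> b' \<in> A2" unfolding A2_def
    proof (rule subsetD[OF alg_G])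
      show "a' \<times> b' \<in> (\<lambda>p. fst p \<times> snd p) ` (A1 \<times> A1)" using a'(1) b'(1) by (intro image_eqI[of _ _ "(a', b')"]) auto
    qed
    ultimately show "\<exists>c\<in>A2. measure Zsp ((g - c) \<union> (c - g)) < d" by blast
  qed
  then obtain c where c: "c \<in> A2" "measure Zsp ((E - c) \<union> (c - E)) < e" using assms(2) by blast
  then show ?thesis
    using assms(2) by (intro bexI[of _ c]) (auto simp: F.emeasure_eq_measure intro!: ennreal_lessI)
qed

definition pre :: "'a measure \<Rightarrow> ('a \<Rightarrow> 'a) \<Rightarrow> 'a set \<Rightarrow> 'a set" where
  "pre M T X = {z \<in> space M. T z \<in> X}"

definition DD :: "'a measure \<Rightarrow> ('a \<Rightarrow> 'a) \<Rightarrow> 'a set \<Rightarrow> nat \<Rightarrow> 'a set" where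
  "DD M T A n = {z \<in> space M. (T ^^ n) z \<in> A}"

lemma invmpt_meas: "T \<in> invmpt M \<Longrightarrow> T \<in> measurable M M"
  by (simp add: invmpt_def)

lemma invmpt_bij: "T \<in> invmpt M \<Longrightarrow> bij_betw T (space M) (space M)"
  by (simp add: invmpt_def)

lemma invmpt_inv_meas: "T \<in> invmpt M \<Longrightarrow> the_inv_into (space M) T \<in> measurable M M"
  by (simp add: invmpt_def)

lemma pre_sets: "T \<in> invmpt M \<Longrightarrow> X \<in> sets M \<Longrightarrow> pre M T X \<in> sets M"
proof -
  assume T: "T \<in> invmpt M" and X: "X \<in> sets M"
  have "pre M T X = T -` X \<inter> space M" by (auto simp: pre_def)
  then show ?thesis using measurable_sets[OF invmpt_meas[OF T] X] by simp
qed

lemma pre_measure: assumes "T \<in> invmpt M" "X \<in> sets M" shows "measure M (pre M T X) = measure M X"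
  unfolding measure_def pre_def using mpz_emeasure[OF invmpt_mpz[OF assms(1)] assms(2)] by simp

lemma img_sets:
  assumes T: "T \<in> invmpt M" and G: "G \<in> sets M"
  shows "T ` G \<in> sets M"
proof -
  have Gs: "G \<subseteq> space M" using G sets.sets_into_space by auto
  have inj: "inj_on T (space M)" and sur: "T ` space M = space M" using invmpt_bij[OF T] by (auto simp: bij_betw_def)
  have "T ` G = the_inv_into (space M) T -` G \<inter> space M"
  proof (intro equalityI subsetI)
    fix z assume "z \<in> T ` G"
    then obtain g where g: "g \<in> G" "z = T g" by auto
    then have "g \<in> space M" using Gs by auto
    then show "z \<in> the_inv_into (space M) T -` G \<inter> space M"
      using g inj sur by (auto simp: the_inv_into_f_f)
  next
    fix z assume z: "z \<in> the_inv_into (space M) T -` G \<inter> space M"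
    then have "T (the_inv_into (space M) T z) = z" using inj sur by (intro f_the_inv_into_f) auto
    then show "z \<in> T ` G" using z by (metis IntD1 image_eqI vimageE)
  qed
  then show ?thesis using measurable_sets[OF invmpt_inv_meas[OF T] G] by simp
qed

lemma pre_img: "T \<in> invmpt M \<Longrightarrow> G \<subseteq> space M \<Longrightarrow> pre M T (T ` G) = G"
proof -
  assume T: "T \<in> invmpt M" and G: "G \<subseteq> space M"
  have inj: "inj_on T (space M)" and sur: "T ` space M = space M" using invmpt_bij[OF T] by (auto simp: bij_betw_def)
  show ?thesis unfolding pre_def using G inj by (auto dest: inj_onD)
qed

lemma img_pre: "T \<in> invmpt M \<Longrightarrow> X \<subseteq> space M \<Longrightarrow> T ` pre M T X = X"
proof -
  assume T: "T \<in> invmpt M" and X: "X \<subseteq> space M"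
  have sur: "T ` space M = space M" using invmpt_bij[OF T] by (auto simp: bij_betw_def)
  show ?thesis
  proof (intro equalityI subsetI)
    fix x assume "x \<in> T ` pre M T X" then show "x \<in> X" by (auto simp: pre_def)
  next
    fix x assume x: "x \<in> X"
    then have "x \<in> T ` space M" using X sur by auto
    then obtain z where "z \<in> space M" "x = T z" by auto
    then show "x \<in> T ` pre M T X" using x by (auto simp: pre_def)
  qed
qed

lemma DD_Suc: "T \<in> invmpt M \<Longrightarrow> DD M T A (Suc n) = pre M T (DD M T A n)"
  unfolding DD_def pre_def using measurable_space[OF invmpt_meas]
  by (auto simp: funpow_swap1)

lemma DD_sets: "T \<in> invmpt M \<Longrightarrow> A \<in> sets M \<Longrightarrow> DD M T A n \<in> sets M"
proof (induction n)
  case 0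
  have "DD M T A 0 = A \<inter> space M" by (auto simp: DD_def)
  then show ?case using 0 by auto
next
  case (Suc n) then show ?case by (simp add: DD_Suc pre_sets)
qed

lemma DD_space: "DD M T A n \<subseteq> space M" by (auto simp: DD_def)

lemma sym_pre:
  assumes fm: "finite_measure M" and S: "S \<in> invmpt M" and T: "T \<in> invmpt M" and X: "X \<in> sets M"
  shows "measure M ((pre M S X - pre M T X) \<union> (pre M T X - pre M S X))
       = measure M ((S ` pre M T X - X) \<union> (X - S ` pre M T X))"
proof -
  define G where "G = pre M T X"
  have GS: "G \<in> sets M" unfolding G_def using pre_sets[OF T X] .
  have Gs: "G \<subseteq> space M" unfolding G_def pre_def by auto
  have SG: "S ` G \<in> sets M" using img_sets[OF S GS] .
  have inj: "inj_on S (space M)" using invmpt_bij[OF S] by (auto simp: bij_betw_def)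
  have "(pre M S X - G) \<union> (G - pre M S X) = pre M S ((S ` G - X) \<union> (X - S ` G))"
    unfolding pre_def using Gs inj by (auto dest: inj_onD)
  moreover have "measure M (pre M S ((S ` G - X) \<union> (X - S ` G))) = measure M ((S ` G - X) \<union> (X - S ` G))"
    using SG X by (intro pre_measure[OF S]) auto
  ultimately show ?thesis unfolding G_def by simp
qed

lemma tele:
  assumes fm: "finite_measure M" and S: "S \<in> invmpt M" and T: "T \<in> invmpt M" and A: "A \<in> sets M"
  shows "measure M ((DD M S A N - DD M T A N) \<union> (DD M T A N - DD M S A N))
     \<le> (\<Sum>k<N. measure M ((S ` DD M T A (Suc k) - DD M T A k) \<union> (DD M T A k - S ` DD M T A (Suc k))))"
proof (induction N)
  case 0 then show ?case by (simp add: DD_def)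
next
  case (Suc N)
  interpret finite_measure M by (rule fm)
  let ?S = "DD M S A N" and ?T = "DD M T A N"
  have SS: "?S \<in> sets M" and TS: "?T \<in> sets M" using DD_sets S T A by auto
  have sub: "(pre M S ?S - pre M T ?T) \<union> (pre M T ?T - pre M S ?S)
      \<subseteq> pre M S ((?S - ?T) \<union> (?T - ?S)) \<union> ((pre M S ?T - pre M T ?T) \<union> (pre M T ?T - pre M S ?T))"
    unfolding pre_def by auto
  have s1: "pre M S ((?S - ?T) \<union> (?T - ?S)) \<in> sets M" using SS TS by (intro pre_sets[OF S]) auto
  have s2: "(pre M S ?T - pre M T ?T) \<union> (pre M T ?T - pre M S ?T) \<in> sets M"
    using pre_sets[OF S TS] pre_sets[OF T TS] by auto
  have "measure M ((DD M S A (Suc N) - DD M T A (Suc N)) \<union> (DD M T A (Suc N) - DD M S A (Suc N)))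
      = measure M ((pre M S ?S - pre M T ?T) \<union> (pre M T ?T - pre M S ?S))"
    by (simp add: DD_Suc S T)
  also have "\<dots> \<le> measure M (pre M S ((?S - ?T) \<union> (?T - ?S)) \<union> ((pre M S ?T - pre M T ?T) \<union> (pre M T ?T - pre M S ?T)))"
    using sub s1 s2 by (intro finite_measure_mono) auto
  also have "\<dots> \<le> measure M (pre M S ((?S - ?T) \<union> (?T - ?S))) + measure M ((pre M S ?T - pre M T ?T) \<union> (pre M T ?T - pre M S ?T))"
    using s1 s2 by (rule measure_Un_le)
  also have "measure M (pre M S ((?S - ?T) \<union> (?T - ?S))) = measure M ((?S - ?T) \<union> (?T - ?S))"
    using SS TS by (intro pre_measure[OF S]) auto
  also have "measure M ((pre M S ?T - pre M T ?T) \<union> (pre M T ?T - pre M S ?T))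
      = measure M ((S ` DD M T A (Suc N) - ?T) \<union> (?T - S ` DD M T A (Suc N)))"
    using sym_pre[OF fm S T TS] by (simp add: DD_Suc T)
  finally show ?case using Suc by simp
qed

lemma norm_integral_le_nn:
  fixes f :: "'a \<Rightarrow> 'b::{banach, second_countable_topology}"
  shows "ennreal (norm (integral\<^sup>L M f)) \<le> (\<integral>\<^sup>+x. ennreal (norm (f x)) \<partial>M)"
  by (cases "integrable M f") (auto simp: integral_norm_bound_ennreal not_integrable_integral_eq)

lemma sq_cmp:
  fixes u v :: complex
  assumes "cmod u \<le> 2" "cmod v \<le> 2"
  shows "(cmod u)\<^sup>2 \<le> (cmod v)\<^sup>2 + 4 * cmod (u - v)"
proof -
  have d: "cmod u - cmod v \<le> cmod (u - v)" by (rule norm_triangle_ineq2)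
  have "(cmod u)\<^sup>2 - (cmod v)\<^sup>2 = (cmod u - cmod v) * (cmod u + cmod v)" by (simp add: power2_eq_square algebra_simps)
  also have "\<dots> \<le> cmod (u - v) * 4"
  proof (cases "cmod u - cmod v \<le> 0")
    case True
    then have "(cmod u - cmod v) * (cmod u + cmod v) \<le> 0" by (intro mult_nonpos_nonneg) auto
    then show ?thesis by (smt (verit) norm_ge_zero)
  next
    case False
    then show ?thesis using d assms by (intro mult_mono) auto
  qed
  finally show ?thesis by simp
qed

lemma Psi_ind_le1:
  "cmod (Psi R (\<lambda>z. indicator A z) (\<lambda>z. indicator B z) x) \<le> 1"
proof -
  have "ennreal (cmod (Psi R (\<lambda>z. indicator A z) (\<lambda>z. indicator B z) x))
      \<le> (\<integral>\<^sup>+y. ennreal (cmod (indicator A (R (x,y)) * cnj (indicator B (x,y) :: complex))) \<partial>I01)"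
    unfolding Psi_def condX_def by (rule norm_integral_le_nn)
  also have "\<dots> \<le> (\<integral>\<^sup>+y. 1 \<partial>I01)" by (intro nn_integral_mono) (auto simp: indicator_def)
  also have "\<dots> = 1" using prob_space.emeasure_space_1[OF prob_I01] by simp
  finally show ?thesis by simp
qed

lemma sec_ind_int:
  assumes R: "R \<in> measurable Zsp Zsp" and A: "A \<in> sets Zsp" and B: "B \<in> sets Zsp" and x: "x \<in> space I01"
  shows "integrable I01 (\<lambda>y. indicator A (R (x,y)) * cnj (indicator B (x,y) :: complex))"
proof (rule finite_measure.integrable_const_bound[OF fm_I01])
  show "AE y in I01. norm (indicator A (R (x,y)) * cnj (indicator B (x,y) :: complex)) \<le> 1"
    by (intro AE_I2) (auto simp: indicator_def)
  have "(\<lambda>z. indicator A (R z) * cnj (indicator B z :: complex)) \<in> borel_measurable Zsp"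
    using measurable_comp[OF R ind_meas[OF A]] ind_meas[OF B] by (simp add: comp_def)
  from sec_meas[OF this x] show "(\<lambda>y. indicator A (R (x,y)) * cnj (indicator B (x,y) :: complex)) \<in> borel_measurable I01"
    by simp
qed

lemma Psi_ind_diff:
  assumes S: "S \<in> invmpt Zsp" and T: "T \<in> invmpt Zsp" and A: "A \<in> sets Zsp" and B: "B \<in> sets Zsp"
    and x: "x \<in> space I01"
  shows "ennreal (cmod (Psi (S ^^ N) (\<lambda>z. indicator A z) (\<lambda>z. indicator B z) x - Psi (T ^^ N) (\<lambda>z. indicator A z) (\<lambda>z. indicator B z) x))
    \<le> (\<integral>\<^sup>+y. indicator ((DD Zsp S A N - DD Zsp T A N) \<union> (DD Zsp T A N - DD Zsp S A N)) (x,y) \<partial>I01)"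
proof -
  have mS: "(S ^^ N) \<in> measurable Zsp Zsp" and mT: "(T ^^ N) \<in> measurable Zsp Zsp"
    using mpz_funpow[OF invmpt_mpz[OF S]] mpz_funpow[OF invmpt_mpz[OF T]] by (auto simp: mpz_def)
  have eq: "Psi (S ^^ N) (\<lambda>z. indicator A z) (\<lambda>z. indicator B z) x - Psi (T ^^ N) (\<lambda>z. indicator A z) (\<lambda>z. indicator B z) x
     = (\<integral>y. indicator A ((S ^^ N) (x,y)) * cnj (indicator B (x,y) :: complex) - indicator A ((T ^^ N) (x,y)) * cnj (indicator B (x,y) :: complex) \<partial>I01)"
    unfolding Psi_def condX_def
    using sec_ind_int[OF mS A B x] sec_ind_int[OF mT A B x] by (rule Bochner_Integration.integral_diff[symmetric])
  have "ennreal (cmod (Psi (S ^^ N) (\<lambda>z. indicator A z) (\<lambda>z. indicator B z) x - Psi (T ^^ N) (\<lambda>z. indicator A z) (\<lambda>z. indicator B z) x))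
     \<le> (\<integral>\<^sup>+y. ennreal (cmod (indicator A ((S ^^ N) (x,y)) * cnj (indicator B (x,y) :: complex) - indicator A ((T ^^ N) (x,y)) * cnj (indicator B (x,y) :: complex))) \<partial>I01)"
    unfolding eq by (rule norm_integral_le_nn)
  also have "\<dots> \<le> (\<integral>\<^sup>+y. indicator ((DD Zsp S A N - DD Zsp T A N) \<union> (DD Zsp T A N - DD Zsp S A N)) (x,y) \<partial>I01)"
  proof (rule nn_integral_mono)
    fix y assume y: "y \<in> space I01"
    then have xy: "(x,y) \<in> space Zsp" using x by simp
    show "ennreal (cmod (indicator A ((S ^^ N) (x,y)) * cnj (indicator B (x,y) :: complex) - indicator A ((T ^^ N) (x,y)) * cnj (indicator B (x,y) :: complex)))
       \<le> indicator ((DD Zsp S A N - DD Zsp T A N) \<union> (DD Zsp T A N - DD Zsp S A N)) (x,y)"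
      using xy unfolding DD_def by (auto simp: indicator_def)
  qed
  finally show ?thesis .
qed

lemma Q_ind_cmp:
  assumes S: "S \<in> invmpt Zsp" and T: "T \<in> invmpt Zsp" and T0: "mpz T0 I01" and A: "A \<in> sets Zsp" and B: "B \<in> sets Zsp"
  shows "Q S T0 N (\<lambda>z. indicator A z) (\<lambda>z. indicator B z)
     \<le> Q T T0 N (\<lambda>z. indicator A z) (\<lambda>z. indicator B z)
        + 4 * ennreal (measure Zsp ((DD Zsp S A N - DD Zsp T A N) \<union> (DD Zsp T A N - DD Zsp S A N)))"
proof -
  let ?f = "\<lambda>z. indicator A z :: complex" and ?g = "\<lambda>z. indicator B z :: complex"
  let ?D = "(DD Zsp S A N - DD Zsp T A N) \<union> (DD Zsp T A N - DD Zsp S A N)"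
  have mS: "mpz S Zsp" and mT: "mpz T Zsp" using S T invmpt_mpz by auto
  have DS: "?D \<in> sets Zsp" using DD_sets[OF S A] DD_sets[OF T A] by auto
  have fm: "?f \<in> borel_measurable Zsp" "?g \<in> borel_measurable Zsp" using ind_meas A B by auto
  have mPsi: "Psi (R ^^ N) ?f ?g \<in> borel_measurable I01" if "mpz R Zsp" for R
    using fm that by (intro Psi_meas mpz_meas mpz_funpow)
  define d where "d x = ennreal (cmod (Psi (S ^^ N) ?f ?g x - Psi (T ^^ N) ?f ?g x))" for x
  have dm: "d \<in> borel_measurable I01" unfolding d_def using mPsi[OF mS] mPsi[OF mT] by measurable
  have pt: "ennreal ((cmod (Phi S T0 N ?f ?g x))\<^sup>2) \<le> ennreal ((cmod (Phi T T0 N ?f ?g x))\<^sup>2) + 4 * d x" for x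
  proof -
    have b1: "cmod (Phi R T0 N ?f ?g x) \<le> 2" for R
    proof -
      have "cmod (Phi R T0 N ?f ?g x) \<le> cmod (Psi (R ^^ N) ?f ?g x) + cmod (Psi (P0 T0 N) ?f ?g x)"
        unfolding Phi_def by (rule norm_triangle_ineq4)
      also have "\<dots> \<le> 1 + 1" by (intro add_mono Psi_ind_le1)
      finally show ?thesis by simp
    qed
    have "Phi S T0 N ?f ?g x - Phi T T0 N ?f ?g x = Psi (S ^^ N) ?f ?g x - Psi (T ^^ N) ?f ?g x"
      by (simp add: Phi_def)
    then have "(cmod (Phi S T0 N ?f ?g x))\<^sup>2 \<le> (cmod (Phi T T0 N ?f ?g x))\<^sup>2 + 4 * cmod (Psi (S ^^ N) ?f ?g x - Psi (T ^^ N) ?f ?g x)"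
      using sq_cmp[OF b1 b1] by metis
    then have "ennreal ((cmod (Phi S T0 N ?f ?g x))\<^sup>2) \<le> ennreal ((cmod (Phi T T0 N ?f ?g x))\<^sup>2 + 4 * cmod (Psi (S ^^ N) ?f ?g x - Psi (T ^^ N) ?f ?g x))"
      by (rule ennreal_leI)
    also have "\<dots> = ennreal ((cmod (Phi T T0 N ?f ?g x))\<^sup>2) + 4 * d x"
      by (simp add: d_def ennreal_mult)
    finally show ?thesis .
  qed
  have "Q S T0 N ?f ?g \<le> (\<integral>\<^sup>+x. ennreal ((cmod (Phi T T0 N ?f ?g x))\<^sup>2) + 4 * d x \<partial>I01)"
    unfolding Q_def using pt by (intro nn_integral_mono) auto
  also have "\<dots> = Q T T0 N ?f ?g + 4 * (\<integral>\<^sup>+x. d x \<partial>I01)"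
    unfolding Q_def using Phi_meas[OF mT T0 fm] dm
    by (subst nn_integral_add) (auto simp: nn_integral_cmult)
  also have "(\<integral>\<^sup>+x. d x \<partial>I01) \<le> (\<integral>\<^sup>+x. \<integral>\<^sup>+y. indicator ?D (x,y) \<partial>I01 \<partial>I01)"
    unfolding d_def by (intro nn_integral_mono Psi_ind_diff S T A B)
  also have "\<dots> = emeasure Zsp ?D"
  proof -
    have im: "indicator ?D \<in> borel_measurable (I01 \<Otimes>\<^sub>M I01)" using DS unfolding Zsp_def[symmetric] by simp
    have "(\<integral>\<^sup>+x. \<integral>\<^sup>+y. indicator ?D (x,y) \<partial>I01 \<partial>I01) = integral\<^sup>N (I01 \<Otimes>\<^sub>M I01) (indicator ?D)"
      by (rule sigma_finite_measure.nn_integral_fst[OF sf_I01 im])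
    then have "(\<integral>\<^sup>+x. \<integral>\<^sup>+y. indicator ?D (x,y) \<partial>I01 \<partial>I01) = (\<integral>\<^sup>+z. indicator ?D z \<partial>Zsp)"
      unfolding Zsp_def[symmetric] by simp
    then show ?thesis using DS by simp
  qed
  also have "\<dots> = ennreal (measure Zsp ?D)" by (rule finite_measure.emeasure_eq_measure[OF fm_Zsp])
  finally show ?thesis by (simp add: add_left_mono mult_left_mono)
qed

lemma ext_invmpt: "ext_set T0 \<subseteq> invmpt Zsp"
  by (auto simp: ext_set_def)

lemma weak_basic:
  assumes "E \<in> sets Zsp" "A \<in> sets Zsp" "e > 0"
  shows "openin (weak_top Zsp) {S \<in> invmpt Zsp. measure Zsp ((S ` E - A) \<union> (A - S ` E)) < e}"
  unfolding weak_top_def by (rule topology_generated_by_Basis) (use assms in blast)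

lemma weak_top_space: "openin (weak_top Zsp) (invmpt Zsp)"
  unfolding weak_top_def by (rule topology_generated_by_Basis) simp

lemma open_U:
  fixes m N :: nat and a b :: "nat \<Rightarrow> (real \<times> real) set" and r :: real
  assumes T0: "mpz T0 I01" and AB: "\<And>i. i < m \<Longrightarrow> a i \<in> sets Zsp \<and> b i \<in> sets Zsp"
  shows "openin (subtopology (weak_top Zsp) (ext_set T0))
     {T \<in> ext_set T0. \<forall>i<m. Q T T0 N (\<lambda>z. indicator (a i) z) (\<lambda>z. indicator (b i) z) < ennreal r}"
    (is "openin ?X ?U")
proof (subst openin_subopen, intro ballI)
  fix T assume TU: "T \<in> ?U"
  then have Tinv: "T \<in> invmpt Zsp" and Text: "T \<in> ext_set T0" using ext_invmpt by auto
  define q where "q i = enn2real (Q T T0 N (\<lambda>z. indicator (a i) z) (\<lambda>z. indicator (b i) z))" for i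
  have qQ: "Q T T0 N (\<lambda>z. indicator (a i) z) (\<lambda>z. indicator (b i) z) = ennreal (q i)" and qr: "q i < r"
    and q0: "0 \<le> q i" if "i < m" for i
  proof -
    have lt: "Q T T0 N (\<lambda>z. indicator (a i) z) (\<lambda>z. indicator (b i) z) < ennreal r" using TU that by auto
    then have "Q T T0 N (\<lambda>z. indicator (a i) z) (\<lambda>z. indicator (b i) z) < top" using less_trans ennreal_less_top by blast
    then show qQ: "Q T T0 N (\<lambda>z. indicator (a i) z) (\<lambda>z. indicator (b i) z) = ennreal (q i)" by (simp add: q_def)
    show "q i < r" using lt unfolding qQ by (simp add: ennreal_less_iff q_def)
    show "0 \<le> q i" by (simp add: q_def)
  qed
  define d where "d i = (r - q i) / (4 * real N + 4)" for i
  have d0: "d i > 0" if "i < m" for i using qr[OF that] by (simp add: d_def)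
  define E where "E i k = DD Zsp T (a i) (Suc k)" for i k
  define F where "F i k = DD Zsp T (a i) k" for i k
  define Sub where "Sub i k = {S \<in> invmpt Zsp. measure Zsp ((S ` E i k - F i k) \<union> (F i k - S ` E i k)) < d i}" for i k
  define W where "W = \<Inter>(insert (invmpt Zsp) ((\<lambda>p. Sub (fst p) (snd p)) ` ({..<m} \<times> {..<N})))"
  have ES: "E i k \<in> sets Zsp" "F i k \<in> sets Zsp" if "i < m" for i k
    unfolding E_def F_def using DD_sets[OF Tinv] AB[OF that] by auto
  have Wo: "openin (weak_top Zsp) W"
    unfolding W_def
  proof (rule openin_Inter)
    show "finite (insert (invmpt Zsp) ((\<lambda>p. Sub (fst p) (snd p)) ` ({..<m} \<times> {..<N})))"
      by (intro finite.insertI finite_imageI finite_cartesian_product) auto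
    show "insert (invmpt Zsp) ((\<lambda>p. Sub (fst p) (snd p)) ` ({..<m} \<times> {..<N})) \<noteq> {}" by simp
    fix X assume "X \<in> insert (invmpt Zsp) ((\<lambda>p. Sub (fst p) (snd p)) ` ({..<m} \<times> {..<N}))"
    then consider "X = invmpt Zsp" | i k where "i < m" "k < N" "X = Sub i k" by auto
    then show "openin (weak_top Zsp) X"
    proof cases
      case 1 then show ?thesis using weak_top_space by simp
    next
      case 2
      show ?thesis unfolding 2(3) Sub_def by (intro weak_basic ES d0 2(1))
    qed
  qed
  have TW: "T \<in> W"
  proof -
    have "T ` E i k = F i k" for i k
      unfolding E_def F_def using DD_Suc[OF Tinv] img_pre[OF Tinv DD_space] by simp
    then have "T \<in> Sub i k" if "i < m" for i k using Tinv d0[OF that] by (simp add: Sub_def)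
    then show ?thesis unfolding W_def using Tinv by auto
  qed
  have WU: "W \<inter> ext_set T0 \<subseteq> ?U"
  proof
    fix S assume S: "S \<in> W \<inter> ext_set T0"
    then have Sinv: "S \<in> invmpt Zsp" using ext_invmpt by auto
    have "Q S T0 N (\<lambda>z. indicator (a i) z) (\<lambda>z. indicator (b i) z) < ennreal r" if i: "i < m" for i
    proof -
      have Sk: "measure Zsp ((S ` E i k - F i k) \<union> (F i k - S ` E i k)) < d i" if "k < N" for k
        using S i that unfolding W_def Sub_def by auto
      have "measure Zsp ((DD Zsp S (a i) N - DD Zsp T (a i) N) \<union> (DD Zsp T (a i) N - DD Zsp S (a i) N))
          \<le> (\<Sum>k<N. measure Zsp ((S ` E i k - F i k) \<union> (F i k - S ` E i k)))"
        unfolding E_def F_def using AB[OF i] by (intro tele fm_Zsp Sinv Tinv) auto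
      also have "\<dots> \<le> (\<Sum>k<N. d i)" using Sk by (intro sum_mono less_imp_le) auto
      also have "\<dots> = real N * d i" by simp
      finally have mle: "measure Zsp ((DD Zsp S (a i) N - DD Zsp T (a i) N) \<union> (DD Zsp T (a i) N - DD Zsp S (a i) N)) \<le> real N * d i" .
      have "Q S T0 N (\<lambda>z. indicator (a i) z) (\<lambda>z. indicator (b i) z)
         \<le> Q T T0 N (\<lambda>z. indicator (a i) z) (\<lambda>z. indicator (b i) z)
          + 4 * ennreal (measure Zsp ((DD Zsp S (a i) N - DD Zsp T (a i) N) \<union> (DD Zsp T (a i) N - DD Zsp S (a i) N)))"
        using AB[OF i] by (intro Q_ind_cmp Sinv Tinv T0) auto
      also have "\<dots> \<le> ennreal (q i) + 4 * ennreal (real N * d i)"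
        unfolding qQ[OF i] using mle by (intro add_left_mono mult_left_mono ennreal_leI) auto
      also have "\<dots> = ennreal (q i + 4 * (real N * d i))"
        using q0[OF i] d0[OF i] by (simp add: ennreal_mult ennreal_plus)
      also have "\<dots> < ennreal r"
      proof (rule ennreal_lessI)
        have "4 * (real N * d i) = (r - q i) * (4 * real N / (4 * real N + 4))"
          by (simp add: d_def field_simps)
        also have "\<dots> < (r - q i) * 1" using qr[OF i] by (intro mult_strict_left_mono) auto
        finally show "q i + 4 * (real N * d i) < r" by simp
        show "0 < r" using qr[OF i] q0[OF i] by simp
      qed
      finally show ?thesis .
    qed
    then show "S \<in> ?U" using S by auto
  qed
  show "\<exists>V. openin ?X V \<and> T \<in> V \<and> V \<subseteq> ?U"
    using openin_subtopology_Int[OF Wo, of "ext_set T0"] TW Text WU by blast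
qed

lemma Q_unfold:
  "Q T T0 N f g = (\<integral>\<^sup>+ x. ennreal ((cmod (
              condX (\<lambda>z. f ((T ^^ N) z) * cnj (g z)) x
            - condX (\<lambda>z. f ((T0 ^^ N) (fst z), snd z) * cnj (g z)) x))\<^sup>2) \<partial>I01)"
  by (simp add: Q_def Phi_def Psi_def P0_def)

lemma rigid_iff:
  "rigid_set T0 = {T \<in> ext_set T0. \<exists>n :: nat \<Rightarrow> nat. strict_mono n \<and> (\<forall>f\<in>L2ZX. \<forall>g\<in>L2ZX. Good T T0 n f g)}"
  unfolding rigid_set_def Good_def Q_unfold ..

lemma ind_L2ZX: "E \<in> sets Zsp \<Longrightarrow> (\<lambda>z. indicator E z :: complex) \<in> L2ZX"
proof -
  assume E: "E \<in> sets Zsp"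
  have l: "L2 (\<lambda>z. indicator E z :: complex)" using L2_ind[OF E] .
  have "integrable Zsp (\<lambda>z. (cmod (indicator E z :: complex))\<^sup>2)"
    using l integrable_sq_iff[OF ind_meas[OF E]] by (simp add: L2_def N2_def)
  moreover have "AE x in I01. (\<integral>\<^sup>+ y. ennreal ((cmod (indicator E (x, y) :: complex))\<^sup>2) \<partial>I01) \<le> ennreal 1"
  proof (rule AE_I2)
    fix x
    have "Sec (\<lambda>z. indicator E z :: complex) x \<le> 1" by (rule Sec_le_1[OF ind_meas[OF E] ind_le1])
    then show "(\<integral>\<^sup>+ y. ennreal ((cmod (indicator E (x, y) :: complex))\<^sup>2) \<partial>I01) \<le> ennreal 1"
      by (simp add: Sec_def)
  qed
  ultimately show ?thesis using ind_meas[OF E] unfolding L2ZX_def by blast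
qed

lemma eventually_inv_less:
  assumes "r > (0::real)"
  shows "eventually (\<lambda>k. 1 / (real k + 2) < r) sequentially"
proof -
  obtain K :: nat where K: "1 / r < real K" using reals_Archimedean2 by blast
  have "1 / (real k + 2) < r" if "k \<ge> K" for k
  proof -
    have "1 / r < real k + 2" using K that by linarith
    then show ?thesis using assms by (simp add: field_simps)
  qed
  then show ?thesis by (auto simp: eventually_sequentially)
qed

theorem main_gdelta:
  fixes T0 :: "real \<Rightarrow> real"
  assumes "T0 \<in> invmpt I01"
  shows "gdelta_in (subtopology (weak_top Zsp) (ext_set T0)) (rigid_set T0)"
proof -
  have T0: "mpz T0 I01" using assms by (rule invmpt_mpz)
  define P where "P = A2 \<times> A2"
  have Pc: "countable P" unfolding P_def using A2_countable by auto
  have Pne: "P \<noteq> {}" unfolding P_def A2_def using alg_empty by blast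
  define a where "a i = fst (from_nat_into P i)" for i
  define b where "b i = snd (from_nat_into P i)" for i
  have abA: "a i \<in> A2 \<and> b i \<in> A2" for i
    using from_nat_into[OF Pne, of i] unfolding a_def b_def P_def by auto
  have abS: "a i \<in> sets Zsp \<and> b i \<in> sets Zsp" for i using abA A2_sets by auto
  have surj: "\<exists>i. a i = A \<and> b i = B" if "A \<in> A2" "B \<in> A2" for A B
  proof -
    have "(A, B) \<in> range (from_nat_into P)" using that range_from_nat_into[OF Pne Pc] by (simp add: P_def)
    then obtain i where "from_nat_into P i = (A, B)" by auto
    then show ?thesis unfolding a_def b_def by (intro exI[of _ i]) simp
  qed
  define U where "U m N = {T \<in> ext_set T0. \<forall>i<m. Q T T0 N (\<lambda>z. indicator (a i) z) (\<lambda>z. indicator (b i) z) < ennreal (1 / Suc m)}" for m N :: nat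
  define C where "C m = \<Union>(U m ` {m..})" for m
  let ?X = "subtopology (weak_top Zsp) (ext_set T0)"
  have Co: "openin ?X (C m)" for m
    unfolding C_def U_def by (intro openin_Union) (auto intro!: open_U T0 abS)
  have eq: "rigid_set T0 = \<Inter>(range C)"
  proof (intro equalityI subsetI)
    fix T assume "T \<in> rigid_set T0"
    then obtain n where T: "T \<in> ext_set T0" and n: "strict_mono n" and G: "\<forall>f\<in>L2ZX. \<forall>g\<in>L2ZX. Good T T0 n f g"
      unfolding rigid_iff by auto
    show "T \<in> \<Inter>(range C)"
    proof (rule InterI)
      fix X assume "X \<in> range C"
      then obtain m where X: "X = C m" by auto
      have "\<forall>i\<in>{..<m}. eventually (\<lambda>k. Q T T0 (n k) (\<lambda>z. indicator (a i) z) (\<lambda>z. indicator (b i) z) < ennreal (1 / Suc m)) sequentially"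
      proof
        fix i assume "i \<in> {..<m}"
        have "Good T T0 n (\<lambda>z. indicator (a i) z) (\<lambda>z. indicator (b i) z)"
          using G ind_L2ZX abS by auto
        then show "eventually (\<lambda>k. Q T T0 (n k) (\<lambda>z. indicator (a i) z) (\<lambda>z. indicator (b i) z) < ennreal (1 / Suc m)) sequentially"
          unfolding Good_def by (rule enn_tendsto0D) simp
      qed
      then have "eventually (\<lambda>k. \<forall>i\<in>{..<m}. Q T T0 (n k) (\<lambda>z. indicator (a i) z) (\<lambda>z. indicator (b i) z) < ennreal (1 / Suc m)) sequentially"
        by (rule eventually_ball_finite[rotated]) simp
      moreover have "eventually (\<lambda>k. m \<le> k) sequentially" by (rule eventually_ge_at_top)
      ultimately have "eventually (\<lambda>k. m \<le> k \<and> (\<forall>i\<in>{..<m}. Q T T0 (n k) (\<lambda>z. indicator (a i) z) (\<lambda>z. indicator (b i) z) < ennreal (1 / Suc m))) sequentially"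
        by eventually_elim auto
      then obtain k where k: "m \<le> k" "\<forall>i\<in>{..<m}. Q T T0 (n k) (\<lambda>z. indicator (a i) z) (\<lambda>z. indicator (b i) z) < ennreal (1 / Suc m)"
        by (auto simp: eventually_sequentially)
      have "m \<le> n k" using k(1) seq_suble[OF n, of k] by linarith
      then have "T \<in> U m (n k)" using T k(2) unfolding U_def by auto
      then show "T \<in> X" unfolding X C_def using \<open>m \<le> n k\<close> by auto
    qed
  next
    fix T assume TC: "T \<in> \<Inter>(range C)"
    define PP where "PP m N \<longleftrightarrow> (\<forall>i<m. Q T T0 N (\<lambda>z. indicator (a i) z) (\<lambda>z. indicator (b i) z) < ennreal (1 / Suc m))" for m N
    have ex: "\<exists>N\<ge>m. PP m N" for m
    proof -
      have "T \<in> C m" using TC by auto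
      then show ?thesis unfolding C_def U_def PP_def by auto
    qed
    have T: "T \<in> ext_set T0" using TC unfolding C_def U_def by auto
    have mono: "PP m' N" if "PP m N" "m' \<le> m" for m m' N
    proof -
      have le: "ennreal (1 / Suc m) \<le> ennreal (1 / Suc m')" using that(2) by (intro ennreal_leI) (simp add: frac_le)
      show ?thesis unfolding PP_def
      proof (intro allI impI)
        fix i assume "i < m'"
        then have "i < m" using that(2) by simp
        then have "Q T T0 N (\<lambda>z. indicator (a i) z) (\<lambda>z. indicator (b i) z) < ennreal (1 / Suc m)"
          using that(1) unfolding PP_def by blast
        then show "Q T T0 N (\<lambda>z. indicator (a i) z) (\<lambda>z. indicator (b i) z) < ennreal (1 / Suc m')"
          using le by (rule less_le_trans)
      qed
    qed
    define ch where "ch m = (SOME N. N \<ge> m \<and> PP m N)" for m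
    have ch: "ch m \<ge> m" "PP m (ch m)" for m using someI_ex[OF ex[of m]] unfolding ch_def by auto
    define n where "n = rec_nat (ch 1) (\<lambda>k x. ch (max (k + 2) (x + 1)))"
    have n0: "n 0 = ch 1" and nS: "n (Suc k) = ch (max (k + 2) (n k + 1))" for k by (simp_all add: n_def)
    have nsm: "strict_mono n" unfolding strict_mono_Suc_iff
    proof
      fix k show "n k < n (Suc k)" using ch(1)[of "max (k + 2) (n k + 1)"] unfolding nS by simp
    qed
    have nP: "PP (Suc k) (n k)" for k
    proof (cases k)
      case 0 then show ?thesis using ch(2)[of 1] n0 by simp
    next
      case (Suc j)
      have "PP (max (j + 2) (n j + 1)) (n k)" using ch(2) unfolding Suc nS .
      then show ?thesis by (rule mono) (simp add: Suc)
    qed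
    have good: "Good T T0 n (\<lambda>z. indicator A z) (\<lambda>z. indicator B z)" if AB: "A \<in> A2" "B \<in> A2" for A B
    proof -
      obtain i where i: "a i = A" "b i = B" using surj[OF AB] by blast
      have "(\<lambda>k. Q T T0 (n k) (\<lambda>z. indicator (a i) z) (\<lambda>z. indicator (b i) z)) \<longlonglongrightarrow> 0"
      proof (rule enn_tendsto0I)
        fix r :: real assume r: "r > 0"
        show "eventually (\<lambda>k. Q T T0 (n k) (\<lambda>z. indicator (a i) z) (\<lambda>z. indicator (b i) z) < ennreal r) sequentially"
          using eventually_inv_less[OF r] eventually_ge_at_top[of i]
        proof eventually_elim
          case (elim k)
          have "Q T T0 (n k) (\<lambda>z. indicator (a i) z) (\<lambda>z. indicator (b i) z) < ennreal (1 / Suc (Suc k))"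
            using nP[of k] elim(2) unfolding PP_def by auto
          also have "\<dots> < ennreal r" using elim(1) r by (intro ennreal_lessI) (auto simp: add.commute)
          finally show ?case .
        qed
      qed
      then show ?thesis unfolding Good_def i .
    qed
    have mT: "mpz T Zsp" using T ext_invmpt invmpt_mpz by blast
    have "\<forall>f\<in>L2ZX. \<forall>g\<in>L2ZX. Good T T0 n f g"
      using dense_good[OF mT T0 A2_sets A2_approx good] by blast
    then show "T \<in> rigid_set T0" unfolding rigid_iff using T nsm by blast
  qed
  have sub: "rigid_set T0 \<subseteq> topspace ?X"
  proof -
    have "topspace (weak_top Zsp) = invmpt Zsp" unfolding weak_top_def by auto
    then show ?thesis using ext_invmpt by (auto simp: rigid_set_def)
  qed
  show ?thesis
    unfolding gdelta_in_alt intersection_of_def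
    using sub Co eq by (intro conjI sub exI[of _ "range C"]) auto
qed

theorem proposition4p4:
  fixes T0 :: "real \<Rightarrow> real"
  assumes "T0 \<in> invmpt I01"
  shows "gdelta_in (subtopology (weak_top Zsp) (ext_set T0)) (rigid_set T0)"
  using assms by (rule main_gdelta)

end
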